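(* Let $\Phi_1,\dots,\Phi_K$ be independent homogeneous Poisson point processes in $\mathbb{R}^2$ with densities $\lambda_1,\dots,\lambda_K>0$, let $P_j>0$, let $\Psi_j$ be positive integers, and let $\alpha>2$. Attach to each $y\in\Phi_j$ a mark $g_{jy}\sim\Gamma(\Psi_j,1)$, all marks i.i.d. within each tier, independent across points and tiers and of the point processes. Let $I=\sum_{j=1}^K\sum_{y\in\Phi_j}P_jg_{jy}\|y\|^{-\alpha}$. Then for $s>0$, $$\mathbb{E}[e^{-sI}]=\exp\Big(-s^{2/\alpha}\sum_{j=1}^K\lambda_jP_j^{2/\alpha}C(\alpha,\Psi_j)\Big),$$ where $C(\alpha,\Psi)=\frac{2\pi}{\alpha}\sum_{m=1}^{\Psi}\binom{\Psi}{m}B\big(\Psi-m+\tfrac{2}{\alpha},\,m-\tfrac{2}{\alpha}\big)$ and $B(x,y)=\int_0^1t^{x-1}(1-t)^{y-1}\,dt$ is Euler's Beta function.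
   Context: $\Gamma(a,1)$ denotes the Gamma distribution with shape $a$ and scale $1$. *)

theory Defs
  imports "HOL-Probability.Probability"
begin

text \<open>A homogeneous Poisson point process on the plane with density lam, given by a
  (measurable) enumeration X of its points: the counting variable of a set A is the
  number of indices k with X k in A (points counted with multiplicity).\<close>

definition pp_count :: "(nat \<Rightarrow> 'a \<Rightarrow> real \<times> real) \<Rightarrow> (real \<times> real) set \<Rightarrow> 'a \<Rightarrow> nat" where
  "pp_count X A \<omega> = card {k. X k \<omega> \<in> A}"

definition poisson_pp :: "'a measure \<Rightarrow> real \<Rightarrow> (nat \<Rightarrow> 'a \<Rightarrow> real \<times> real) \<Rightarrow> bool" where
  "poisson_pp M lam X \<longleftrightarrow>
     (\<forall>k. X k \<in> borel_measurable M) \<and>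
     (\<forall>\<omega>\<in>space M. \<forall>A. bounded A \<longrightarrow> finite {k. X k \<omega> \<in> A}) \<and>
     (\<forall>(As :: nat \<Rightarrow> (real \<times> real) set) n.
        (\<forall>i<n. As i \<in> sets lborel \<and> bounded (As i)) \<and> disjoint_family_on As {..<n} \<longrightarrow>
          prob_space.indep_vars M (\<lambda>_. count_space UNIV) (\<lambda>i. pp_count X (As i)) {..<n} \<and>
          (\<forall>i<n. \<forall>m::nat. measure M {\<omega> \<in> space M. pp_count X (As i) \<omega> = m}
               = (lam * measure lborel (As i)) ^ m / fact m * exp (- (lam * measure lborel (As i)))))"

text \<open>Sigma-algebras for the joint independence statement: Inl j is the whole point
  sequence of tier j, Inr (j,k) is the mark of the k-th point of tier j.\<close>

definition mark_sigma :: "'a measure \<Rightarrow> (nat \<Rightarrow> nat \<Rightarrow> 'a \<Rightarrow> real \<times> real) \<Rightarrow> (nat \<Rightarrow> nat \<Rightarrow> 'a \<Rightarrow> real)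
    \<Rightarrow> nat + nat \<times> nat \<Rightarrow> 'a set set" where
  "mark_sigma M X g i = (case i of
      Inl j \<Rightarrow> sets (vimage_algebra (space M) (\<lambda>\<omega> k. X j k \<omega>) (Pi\<^sub>M UNIV (\<lambda>_. borel)))
    | Inr (j, k) \<Rightarrow> sets (vimage_algebra (space M) (g j k) borel))"

definition interference :: "nat \<Rightarrow> (nat \<Rightarrow> real) \<Rightarrow> real \<Rightarrow> (nat \<Rightarrow> nat \<Rightarrow> 'a \<Rightarrow> real \<times> real)
    \<Rightarrow> (nat \<Rightarrow> nat \<Rightarrow> 'a \<Rightarrow> real) \<Rightarrow> 'a \<Rightarrow> ennreal" where
  "interference K P alpha X g \<omega> =
     (\<Sum>j<K. \<Sum>k. (if X j k \<omega> = 0 then \<infinity>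
                    else ennreal (P j * g j k \<omega> * norm (X j k \<omega>) powr (- alpha))))"

definition exp_neg :: "real \<Rightarrow> ennreal \<Rightarrow> real" where
  "exp_neg s I = (if I = \<infinity> then 0 else exp (- s * enn2real I))"

definition C_const :: "real \<Rightarrow> nat \<Rightarrow> real" where
  "C_const alpha Psi = 2 * pi / alpha *
     (\<Sum>m=1..Psi. real (Psi choose m) * Beta (real Psi - real m + 2 / alpha) (real m - 2 / alpha))"

end

theory Submission
  imports Defs
begin

lemma exp_neg_add: "exp_neg s (a + b) = exp_neg s a * exp_neg s b"
proof (cases "a = \<infinity> \<or> b = \<infinity>")
  case True then show ?thesis by (auto simp: exp_neg_def)
next
  case False
  then have "a < \<infinity>" "b < \<infinity>" by (metis infinity_ennreal_def top.not_eq_extremum)+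
  then have "enn2real (a + b) = enn2real a + enn2real b" by (simp add: enn2real_plus)
  moreover have "exp (- s * (x + y)) = exp (- s * x) * exp (- s * y)" for x y
    by (simp add: algebra_simps exp_add[symmetric])
  ultimately show ?thesis using False by (simp add: exp_neg_def ennreal_add_eq_top)
qed

lemma exp_neg_zero[simp]: "exp_neg s 0 = 1"
  by (simp add: exp_neg_def)

lemma exp_neg_sum: "finite A \<Longrightarrow> exp_neg s (\<Sum>j\<in>A. f j) = (\<Prod>j\<in>A. exp_neg s (f j))"
  by (induction A rule: finite_induct) (simp_all add: exp_neg_add)

lemma exp_neg_nonneg: "0 \<le> exp_neg s x"
  by (simp add: exp_neg_def)

lemma exp_neg_le1: "0 \<le> s \<Longrightarrow> exp_neg s x \<le> 1"
  by (simp add: exp_neg_def mult_nonneg_nonneg)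

lemma exp_neg_antimono:
  assumes s: "0 \<le> s" and xy: "x \<le> y" shows "exp_neg s y \<le> exp_neg s x"
proof (cases "y = \<infinity>")
  case True then show ?thesis by (simp add: exp_neg_def)
next
  case False
  have yl: "y < top" using False by (metis infinity_ennreal_def top.not_eq_extremum)
  have xl: "x < top" by (rule le_less_trans[OF xy yl])
  have xn: "x \<noteq> \<infinity>" using xl by (metis infinity_ennreal_def less_irrefl)
  have "enn2real x \<le> enn2real y" by (rule enn2real_mono[OF xy yl])
  then have "- s * enn2real y \<le> - s * enn2real x" using s by (simp add: mult_left_mono)
  then have "exp (- s * enn2real y) \<le> exp (- s * enn2real x)" by simp
  then show ?thesis using False xn by (simp add: exp_neg_def)
qed

lemma exp_neg_measurable[measurable]: "exp_neg s \<in> borel_measurable borel"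
  unfolding exp_neg_def by measurable

lemma exp_neg_suminf:
  fixes f :: "nat \<Rightarrow> ennreal"
  assumes s: "0 < s"
  shows "(\<lambda>n. \<Prod>k<n. exp_neg s (f k)) \<longlonglongrightarrow> exp_neg s (suminf f)"
proof -
  have eq: "(\<lambda>n. \<Prod>k<n. exp_neg s (f k)) = (\<lambda>n. exp_neg s (\<Sum>k<n. f k))"
    by (simp add: exp_neg_sum)
  have lim: "(\<lambda>n. \<Sum>k<n. f k) \<longlonglongrightarrow> suminf f"
    by (intro summable_LIMSEQ summableI)
  show ?thesis
  proof (cases "suminf f = \<infinity>")
    case False
    have fin: "(\<Sum>k<n. f k) \<noteq> \<infinity>" for n
    proof -
      have "(\<Sum>k<n. f k) \<le> suminf f" by (intro sum_le_suminf summableI) auto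
      then show ?thesis using False by (metis infinity_ennreal_def top.extremum_uniqueI)
    qed
    have "(\<lambda>n. enn2real (\<Sum>k<n. f k)) \<longlonglongrightarrow> enn2real (suminf f)"
    proof -
      have e: "ennreal (enn2real (suminf f)) = suminf f"
        using False by (metis ennreal_enn2real infinity_ennreal_def less_top)
      have lim': "(\<lambda>n. \<Sum>k<n. f k) \<longlonglongrightarrow> ennreal (enn2real (suminf f))"
        unfolding e by (rule lim)
      show ?thesis by (rule tendsto_enn2real[OF lim' enn2real_nonneg])
    qed
    then have "(\<lambda>n. exp (- s * enn2real (\<Sum>k<n. f k))) \<longlonglongrightarrow> exp (- s * enn2real (suminf f))"
      by (rule tendsto_exp[OF tendsto_mult[OF tendsto_const]])
    then have "(\<lambda>n. exp_neg s (\<Sum>k<n. f k)) \<longlonglongrightarrow> exp_neg s (suminf f)"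
      using False fin by (simp add: exp_neg_def)
    then show ?thesis unfolding eq .
  next
    case True
    show ?thesis unfolding eq
    proof (rule LIMSEQ_I)
      fix r :: real assume r: "0 < r"
      define B where "B = max 0 (- ln r / s) + 1"
      have B0: "0 \<le> B" by (simp add: B_def)
      have "- ln r / s < B" by (simp add: B_def)
      then have "- ln r < s * B" using s by (simp add: field_simps)
      then have "exp (- s * B) < exp (ln r)" by simp
      then have eB: "exp (- s * B) < r" using r by simp
      have "ennreal B < suminf f" using True by simp
      then have "eventually (\<lambda>n. ennreal B < (\<Sum>k<n. f k)) sequentially"
        using lim by (rule order_tendstoD(1)[rotated])
      then obtain N where N: "\<And>n. n \<ge> N \<Longrightarrow> ennreal B < (\<Sum>k<n. f k)"
        by (auto simp: eventually_sequentially)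
      show "\<exists>no. \<forall>n\<ge>no. norm (exp_neg s (\<Sum>k<n. f k) - exp_neg s (suminf f)) < r"
      proof (intro exI allI impI)
        fix n assume "n \<ge> N"
        then have "exp_neg s (\<Sum>k<n. f k) \<le> exp_neg s (ennreal B)"
          using N s by (intro exp_neg_antimono) (auto intro: less_imp_le)
        also have "\<dots> = exp (- s * B)" using B0 by (simp add: exp_neg_def)
        finally show "norm (exp_neg s (\<Sum>k<n. f k) - exp_neg s (suminf f)) < r"
          using eB True by (simp add: exp_neg_def exp_neg_nonneg abs_of_nonneg)
      qed
    qed
  qed
qed

lemma prod_subset_le:
  fixes a :: "nat \<Rightarrow> real"
  assumes "finite B" "A \<subseteq> B" "\<And>k. k \<in> B \<Longrightarrow> 0 \<le> a k \<and> a k \<le> 1"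
  shows "prod a B \<le> prod a A"
proof -
  have "prod a B = prod a A * prod a (B - A)"
    using assms by (metis prod.subset_diff mult.commute)
  moreover have "prod a (B - A) \<le> 1" using assms by (intro prod_le_1) auto
  moreover have "0 \<le> prod a A" using assms by (intro prod_nonneg) auto
  ultimately show ?thesis by (simp add: mult_left_le)
qed

lemma prod_lim_finite_sets:
  fixes a :: "nat \<Rightarrow> real" and F :: "nat \<Rightarrow> nat set"
  assumes a: "\<And>k. 0 \<le> a k" "\<And>k. a k \<le> 1" and fin: "\<And>R. finite (F R)"
    and mono: "\<And>R R'. R \<le> R' \<Longrightarrow> F R \<subseteq> F R'" and cov: "\<And>k. \<exists>R. k \<in> F R"
  shows "(\<lambda>n. \<Prod>k<n. a k) \<longlonglongrightarrow> lim (\<lambda>n. \<Prod>k<n. a k)"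
    and "(\<lambda>R. \<Prod>k\<in>F R. a k) \<longlonglongrightarrow> lim (\<lambda>n. \<Prod>k<n. a k)"
proof -
  define p where "p n = (\<Prod>k<n. a k)" for n
  define q where "q R = (\<Prod>k\<in>F R. a k)" for R
  have dp: "decseq p" unfolding p_def decseq_def
    using a by (intro allI impI prod_subset_le) auto
  have dq: "decseq q" unfolding q_def decseq_def
    using a fin mono by (intro allI impI prod_subset_le) auto
  have p0: "0 \<le> p n" for n unfolding p_def using a by (intro prod_nonneg) auto
  have q0: "0 \<le> q n" for n unfolding q_def using a by (intro prod_nonneg) auto
  obtain L where L: "p \<longlonglongrightarrow> L" using decseq_convergent[OF dp, of 0] p0 by blast
  obtain L' where L': "q \<longlonglongrightarrow> L'" using decseq_convergent[OF dq, of 0] q0 by blast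
  have Lp: "L \<le> p n" for n using dp L by (rule decseq_ge)
  have Lq: "L' \<le> q n" for n using dq L' by (rule decseq_ge)
  have cov2: "\<exists>R. {..<n} \<subseteq> F R" for n
  proof (induction n)
    case 0 then show ?case by auto
  next
    case (Suc n)
    then obtain R1 where R1: "{..<n} \<subseteq> F R1" by blast
    obtain R2 where R2: "n \<in> F R2" using cov by blast
    have m1: "F R1 \<subseteq> F (max R1 R2)" by (rule mono) simp
    have m2: "F R2 \<subseteq> F (max R1 R2)" by (rule mono) simp
    have "{..<Suc n} \<subseteq> F (max R1 R2)"
    proof
      fix x assume "x \<in> {..<Suc n}"
      then have "x < n \<or> x = n" by auto
      then show "x \<in> F (max R1 R2)" using R1 R2 m1 m2 by blast
    qed
    then show ?case by blast
  qed
  have "L' \<le> p n" for n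
  proof -
    obtain R where R: "{..<n} \<subseteq> F R" using cov2 by blast
    have "q R \<le> p n" unfolding q_def p_def using R fin a by (intro prod_subset_le) auto
    then show ?thesis using Lq[of R] by simp
  qed
  then have 1: "L' \<le> L" using L by (intro LIMSEQ_le_const) auto
  have "L \<le> q R" for R
  proof -
    obtain m where m: "F R \<subseteq> {..<m}"
      using fin[of R] by (meson finite_nat_iff_bounded)
    have "p m \<le> q R" unfolding q_def p_def using m fin a by (intro prod_subset_le) auto
    then show ?thesis using Lp[of m] by simp
  qed
  then have 2: "L \<le> L'" using L' by (intro LIMSEQ_le_const) auto
  have limp: "lim p = L" using L by (rule limI)
  show "(\<lambda>n. \<Prod>k<n. a k) \<longlonglongrightarrow> lim (\<lambda>n. \<Prod>k<n. a k)"
    using L limp unfolding p_def by simp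
  show "(\<lambda>R. \<Prod>k\<in>F R. a k) \<longlonglongrightarrow> lim (\<lambda>n. \<Prod>k<n. a k)"
    using L' 1 2 limp unfolding p_def q_def by simp
qed

lemma (in prob_space) poisson_pgf:
  fixes N :: "'a \<Rightarrow> nat"
  assumes N[measurable]: "N \<in> measurable M (count_space UNIV)" and mu: "0 \<le> mu"
    and c: "0 \<le> c" "c \<le> 1"
    and dist: "\<And>m. measure M {\<omega>\<in>space M. N \<omega> = m} = mu ^ m / fact m * exp (- mu)"
  shows "expectation (\<lambda>\<omega>. c ^ N \<omega>) = exp (- mu * (1 - c))"
proof -
  define A where "A m = {\<omega>\<in>space M. N \<omega> = m}" for m
  have A[measurable]: "A m \<in> events" for m unfolding A_def by measurable
  have dA: "disjoint_family A" unfolding A_def disjoint_family_on_def by auto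
  have "(\<integral>\<^sup>+\<omega>. ennreal (c ^ N \<omega>) \<partial>M) = (\<integral>\<^sup>+\<omega>. (\<Sum>m. ennreal (c ^ m) * indicator (A m) \<omega>) \<partial>M)"
  proof (intro nn_integral_cong)
    fix x assume "x \<in> space M"
    then have "x \<in> A (N x)" by (simp add: A_def)
    from suminf_cmult_indicator[OF dA this, of "\<lambda>m. ennreal (c ^ m)"]
    show "ennreal (c ^ N x) = (\<Sum>m. ennreal (c ^ m) * indicator (A m) x)" by simp
  qed
  also have "\<dots> = (\<Sum>m. \<integral>\<^sup>+\<omega>. ennreal (c ^ m) * indicator (A m) \<omega> \<partial>M)"
    by (intro nn_integral_suminf) measurable
  also have "\<dots> = (\<Sum>m. ennreal (c ^ m * (mu ^ m / fact m * exp (- mu))))"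
  proof (intro suminf_cong)
    fix m
    have "(\<integral>\<^sup>+\<omega>. ennreal (c ^ m) * indicator (A m) \<omega> \<partial>M) = ennreal (c ^ m) * emeasure M (A m)"
      by (rule nn_integral_cmult_indicator) (rule A)
    also have "emeasure M (A m) = ennreal (mu ^ m / fact m * exp (- mu))"
      using dist[of m] by (simp add: emeasure_eq_measure A_def)
    also have "ennreal (c ^ m) * ennreal (mu ^ m / fact m * exp (- mu)) = ennreal (c ^ m * (mu ^ m / fact m * exp (- mu)))"
      using c mu by (intro ennreal_mult[symmetric]) auto
    finally show "(\<integral>\<^sup>+\<omega>. ennreal (c ^ m) * indicator (A m) \<omega> \<partial>M) = ennreal (c ^ m * (mu ^ m / fact m * exp (- mu)))" .
  qed
  also have "\<dots> = ennreal (\<Sum>m. c ^ m * (mu ^ m / fact m * exp (- mu)))"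
  proof -
    have "(\<lambda>m. (c * mu) ^ m /\<^sub>R fact m) sums exp (c * mu)" by (rule exp_converges)
    then have "(\<lambda>m. (c * mu) ^ m /\<^sub>R fact m * exp (- mu)) sums (exp (c * mu) * exp (- mu))"
      by (rule sums_mult2)
    then have s: "(\<lambda>m. c ^ m * (mu ^ m / fact m * exp (- mu))) sums (exp (c * mu) * exp (- mu))"
      by (simp add: power_mult_distrib divide_inverse mult_ac)
    show ?thesis using c mu by (intro suminf_ennreal2 sums_summable[OF s]) auto
  qed
  also have "(\<Sum>m. c ^ m * (mu ^ m / fact m * exp (- mu))) = exp (- mu * (1 - c))"
  proof -
    have "(\<lambda>m. (c * mu) ^ m /\<^sub>R fact m) sums exp (c * mu)" by (rule exp_converges)
    then have "(\<lambda>m. (c * mu) ^ m /\<^sub>R fact m * exp (- mu)) sums (exp (c * mu) * exp (- mu))"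
      by (rule sums_mult2)
    then have s: "(\<lambda>m. c ^ m * (mu ^ m / fact m * exp (- mu))) sums (exp (c * mu) * exp (- mu))"
      by (simp add: power_mult_distrib divide_inverse mult_ac)
    have "exp (c * mu) * exp (- mu) = exp (- mu * (1 - c))"
      by (simp add: exp_add[symmetric] algebra_simps)
    then show ?thesis using s sums_unique by metis
  qed
  finally have nn: "(\<integral>\<^sup>+\<omega>. ennreal (c ^ N \<omega>) \<partial>M) = ennreal (exp (- mu * (1 - c)))" .
  have int: "integrable M (\<lambda>\<omega>. c ^ N \<omega>)"
    using c by (intro integrable_const_bound[where B=1]) (auto intro: power_le_one)
  have "(\<integral>\<^sup>+\<omega>. ennreal (c ^ N \<omega>) \<partial>M) = ennreal (expectation (\<lambda>\<omega>. c ^ N \<omega>))"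
    using int c by (intro nn_integral_eq_integral) auto
  then show ?thesis using nn c by (simp add: integral_nonneg_AE)
qed

lemma norm_lt_sqrt_iff: "0 \<le> b \<Longrightarrow> (norm (x::'a::real_normed_vector) < sqrt b) = (norm x ^ 2 < b)"
proof -
  assume "0 \<le> b"
  have "sqrt (norm x ^ 2) = norm x" by simp
  then show ?thesis by (metis real_sqrt_less_iff)
qed

lemma ball_sqrt_eq: "0 \<le> b \<Longrightarrow> ball (0::real\<times>real) (sqrt b) = {x. norm x ^ 2 < b}"
  by (auto simp: norm_lt_sqrt_iff)

lemma measure_ball2: "0 \<le> r \<Longrightarrow> measure lborel (ball (0::real\<times>real) r) = pi * r ^ 2"
proof -
  assume r: "0 \<le> r"
  have u: "unit_ball_vol 2 = pi" using unit_ball_vol_even[of 1] by simp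
  show ?thesis using content_ball[OF r, of "0::real\<times>real"] u by (simp add: power2_eq_square)
qed

lemma annulus_eq:
  assumes "0 \<le> a" "a \<le> b"
  shows "{x::real\<times>real. a \<le> norm x ^ 2 \<and> norm x ^ 2 < b} = ball 0 (sqrt b) - ball 0 (sqrt a)"
  using assms by (auto simp: ball_sqrt_eq)

lemma annulus_props:
  assumes "0 \<le> a" "a \<le> b"
  shows "{x::real\<times>real. a \<le> norm x ^ 2 \<and> norm x ^ 2 < b} \<in> sets lborel"
    and "bounded {x::real\<times>real. a \<le> norm x ^ 2 \<and> norm x ^ 2 < b}"
    and "measure lborel {x::real\<times>real. a \<le> norm x ^ 2 \<and> norm x ^ 2 < b} = pi * (b - a)"
proof -
  note eq = annulus_eq[OF assms]
  show "{x::real\<times>real. a \<le> norm x ^ 2 \<and> norm x ^ 2 < b} \<in> sets lborel"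
    unfolding eq by simp
  show "bounded {x::real\<times>real. a \<le> norm x ^ 2 \<and> norm x ^ 2 < b}"
    unfolding eq by (rule bounded_subset[OF bounded_ball]) auto
  have sub: "ball (0::real\<times>real) (sqrt a) \<subseteq> ball 0 (sqrt b)"
    using assms by (intro subset_ball) simp
  have sb: "0 \<le> sqrt b" using assms by simp
  have fin: "emeasure lborel (ball (0::real\<times>real) (sqrt b)) \<noteq> \<infinity>"
    by (simp add: emeasure_ball[OF sb])
  have "measure lborel (ball (0::real\<times>real) (sqrt b) - ball 0 (sqrt a))
      = measure lborel (ball (0::real\<times>real) (sqrt b)) - measure lborel (ball (0::real\<times>real) (sqrt a))"
    by (rule measure_Diff[OF fin _ _ sub]) auto
  also have "\<dots> = pi * (b - a)"
    using assms by (simp add: measure_ball2 algebra_simps)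
  finally show "measure lborel {x::real\<times>real. a \<le> norm x ^ 2 \<and> norm x ^ 2 < b} = pi * (b - a)"
    unfolding eq .
qed

lemma floor_idx:
  assumes T: "0 < T" and m: "0 < m" and t: "0 \<le> t"
  shows "(T * real i / real m \<le> t \<and> t < T * (real i + 1) / real m) \<longleftrightarrow> nat \<lfloor>t * real m / T\<rfloor> = i"
proof -
  define y where "y = t * real m / T"
  have y0: "0 \<le> y" using T m t by (simp add: y_def)
  have 1: "T * real i / real m \<le> t \<longleftrightarrow> real i \<le> y"
    using T m by (simp add: y_def field_simps)
  have 2: "t < T * (real i + 1) / real m \<longleftrightarrow> y < real i + 1"
    using T m by (simp add: y_def field_simps)
  have 3: "nat \<lfloor>y\<rfloor> = i \<longleftrightarrow> \<lfloor>y\<rfloor> = int i"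
    using y0 by auto
  have 4: "\<lfloor>y\<rfloor> = int i \<longleftrightarrow> real i \<le> y \<and> y < real i + 1"
    by (simp add: floor_eq_iff)
  show ?thesis using 1 2 3 4 by (simp add: y_def)
qed

lemma idx_less:
  assumes T: "0 < T" and m: "0 < m" and t: "0 \<le> t"
  shows "nat \<lfloor>t * real m / T\<rfloor> < m \<longleftrightarrow> t < T"
proof -
  define y where "y = t * real m / T"
  have y0: "0 \<le> y" using T m t by (simp add: y_def)
  have "nat \<lfloor>y\<rfloor> < m \<longleftrightarrow> \<lfloor>y\<rfloor> < int m" using y0 by (simp add: nat_less_iff)
  also have "\<dots> \<longleftrightarrow> y < real m" by (simp add: floor_less_iff)
  also have "\<dots> \<longleftrightarrow> t < T" using T m by (simp add: y_def field_simps)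
  finally show ?thesis by (simp add: y_def)
qed

lemma step_conv:
  fixes H :: "real \<Rightarrow> real"
  assumes Hc: "continuous_on {0<..} H" and T: "0 < T" and t: "0 \<le> t"
  shows "(\<lambda>n. H (T * real (nat \<lfloor>t * real (Suc n) / T\<rfloor>) / real (Suc n))) \<longlonglongrightarrow> H t"
proof (cases "t = 0")
  case True then show ?thesis by simp
next
  case False
  then have t0: "0 < t" using t by simp
  define g where "g n = T * real (nat \<lfloor>t * real (Suc n) / T\<rfloor>) / real (Suc n)" for n
  have bnd: "t - T / real (Suc n) \<le> g n \<and> g n \<le> t" for n
  proof -
    define y where "y = t * real (Suc n) / T"
    have y0: "0 \<le> y" using T t by (simp add: y_def)
    have fl: "real (nat \<lfloor>y\<rfloor>) = of_int \<lfloor>y\<rfloor>" by (rule of_nat_nat) (simp add: y0)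
    have Ty: "T * y = t * real (Suc n)" using T by (simp add: y_def)
    have a: "y - 1 \<le> of_int \<lfloor>y\<rfloor>" "of_int \<lfloor>y\<rfloor> \<le> y"
      using floor_correct[of y] by linarith+
    have "g n = T * real (nat \<lfloor>y\<rfloor>) / real (Suc n)" by (simp only: g_def y_def)
    then have "g n = T * of_int \<lfloor>y\<rfloor> / real (Suc n)" by (simp only: fl)
    moreover have "T * (y - 1) / real (Suc n) = t - T / real (Suc n)"
    proof -
      have "T * (y - 1) / real (Suc n) = (t * real (Suc n) - T) / real (Suc n)"
        by (simp add: right_diff_distrib Ty)
      also have "\<dots> = t - T / real (Suc n)" by (simp add: diff_divide_distrib)
      finally show ?thesis .
    qed
    moreover have "T * y / real (Suc n) = t" by (simp add: Ty)
    moreover have "T * (y - 1) / real (Suc n) \<le> T * of_int \<lfloor>y\<rfloor> / real (Suc n)"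
      using a T by (intro divide_right_mono mult_left_mono) auto
    moreover have "T * of_int \<lfloor>y\<rfloor> / real (Suc n) \<le> T * y / real (Suc n)"
      using a T by (intro divide_right_mono mult_left_mono) auto
    ultimately show ?thesis by simp
  qed
  have z: "(\<lambda>n. T / real (Suc n)) \<longlonglongrightarrow> 0"
    using LIMSEQ_Suc[OF lim_const_over_n[of T]] by simp
  have l1: "(\<lambda>n. t - T / real (Suc n)) \<longlonglongrightarrow> t"
    using tendsto_diff[OF tendsto_const[of t] z] by simp
  have gl: "g \<longlonglongrightarrow> t"
    by (rule tendsto_sandwich[OF _ _ l1 tendsto_const]) (use bnd in auto)
  have "isCont H t" using Hc t0 by (simp add: continuous_on_eq_continuous_at)
  from isCont_tendsto_compose[OF this gl] show ?thesis by (simp add: g_def)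
qed

lemma riemann_step:
  fixes H :: "real \<Rightarrow> real"
  assumes Hm[measurable]: "H \<in> borel_measurable borel" and Hc: "continuous_on {0<..} H"
    and H0: "\<And>t. 0 \<le> H t" and H1: "\<And>t. H t \<le> 1" and T: "0 < T"
  shows "(\<lambda>n. \<Sum>i<Suc n. T / real (Suc n) * (1 - H (T * real i / real (Suc n))))
           \<longlonglongrightarrow> (LINT t:{0<..<T}|lborel. 1 - H t)"
proof -
  define g where "g n t = T * real (nat \<lfloor>t * real (Suc n) / T\<rfloor>) / real (Suc n)" for n t
  define I where "I n i = {T * real i / real (Suc n) ..< T * (real i + 1) / real (Suc n)}" for n i
  have gm[measurable]: "g n \<in> borel_measurable borel" for n unfolding g_def by measurable
  have Ile: "T * real i / real (Suc n) \<le> T * (real i + 1) / real (Suc n)" for n i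
    using T by (intro divide_right_mono mult_left_mono) auto
  have Idiff: "T * (real i + 1) / real (Suc n) - T * real i / real (Suc n) = T / real (Suc n)" for n i
    by (simp add: diff_divide_distrib[symmetric] distrib_left)
  have Ifin: "emeasure lborel (I n i) < \<infinity>" for n i
    unfolding I_def using Ile[of i n] by simp
  have Imeas: "measure lborel (I n i) = T / real (Suc n)" for n i
    unfolding I_def using Ile[of i n] Idiff[of i n] by simp
  have pw: "indicator {0..<T} t * (1 - H (g n t))
      = (\<Sum>i<Suc n. (1 - H (T * real i / real (Suc n))) * indicator (I n i) t)" for n t
  proof (cases "0 \<le> t \<and> t < T")
    case True
    define i0 where "i0 = nat \<lfloor>t * real (Suc n) / T\<rfloor>"
    have i0: "i0 < Suc n" using idx_less[OF T _ , of "Suc n" t] True by (simp add: i0_def)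
    have mem: "t \<in> I n i \<longleftrightarrow> i = i0" for i
      using floor_idx[OF T, of "Suc n" t i] True by (auto simp: I_def i0_def)
    have "(\<Sum>i<Suc n. (1 - H (T * real i / real (Suc n))) * indicator (I n i) t)
        = (\<Sum>i<Suc n. if i = i0 then 1 - H (T * real i0 / real (Suc n)) else 0)"
      by (intro sum.cong) (auto simp: mem)
    also have "\<dots> = 1 - H (T * real i0 / real (Suc n))" using i0 by simp
    finally show ?thesis using True by (simp add: g_def i0_def)
  next
    case False
    have nm: "t \<notin> I n i" if "i < Suc n" for i
    proof
      assume "t \<in> I n i"
      then have a: "T * real i / real (Suc n) \<le> t" and b: "t < T * (real i + 1) / real (Suc n)"
        by (auto simp: I_def)
      have "0 \<le> T * real i / real (Suc n)" using T by simp
      moreover have "T * (real i + 1) / real (Suc n) \<le> T" using T that by (simp add: field_simps)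
      ultimately show False using a b False by linarith
    qed
    have "(\<Sum>i<Suc n. (1 - H (T * real i / real (Suc n))) * indicator (I n i) t) = 0"
      by (rule sum.neutral) (auto simp: nm)
    then show ?thesis using False by simp
  qed
  have integ: "(LINT t|lborel. indicator {0..<T} t * (1 - H (g n t)))
      = (\<Sum>i<Suc n. T / real (Suc n) * (1 - H (T * real i / real (Suc n))))" for n
  proof -
    have "(LINT t|lborel. indicator {0..<T} t * (1 - H (g n t)))
        = (LINT t|lborel. (\<Sum>i<Suc n. (1 - H (T * real i / real (Suc n))) * indicator (I n i) t))"
      by (intro Bochner_Integration.integral_cong refl pw)
    also have "\<dots> = (\<Sum>i<Suc n. LINT t|lborel. (1 - H (T * real i / real (Suc n))) * indicator (I n i) t)"
      by (intro Bochner_Integration.integral_sum integrable_mult_right integrable_real_indicator Ifin)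
         (simp add: I_def)
    also have "\<dots> = (\<Sum>i<Suc n. (1 - H (T * real i / real (Suc n))) * (T / real (Suc n)))"
    proof (intro sum.cong refl)
      fix i
      note Imeas[of n i]
      then show "(LINT t|lborel. (1 - H (T * real i / real (Suc n))) * indicator (I n i) t)
          = (1 - H (T * real i / real (Suc n))) * (T / real (Suc n))"
        by simp
    qed
    finally show ?thesis by (simp add: mult.commute)
  qed
  have "(\<lambda>n. LINT t|lborel. indicator {0..<T} t * (1 - H (g n t)))
      \<longlonglongrightarrow> (LINT t|lborel. indicator {0<..<T} t * (1 - H t))"
  proof (rule integral_dominated_convergence[where w="indicator {0..<T}"])
    show "(\<lambda>t. indicator {0<..<T} t * (1 - H t)) \<in> borel_measurable lborel" by measurable
    show "(\<lambda>t. indicator {0..<T} t * (1 - H (g n t))) \<in> borel_measurable lborel" for n by measurable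
    show "integrable lborel (indicator {0..<T} :: real \<Rightarrow> real)"
      by (rule integrable_real_indicator) (use T in simp_all)
    show "AE t in lborel. (\<lambda>n. indicator {0..<T} t * (1 - H (g n t))) \<longlonglongrightarrow> indicator {0<..<T} t * (1 - H t)"
      using AE_lborel_singleton[of "0::real"]
    proof eventually_elim
      fix t :: real assume t0: "t \<noteq> 0"
      show "(\<lambda>n. indicator {0..<T} t * (1 - H (g n t))) \<longlonglongrightarrow> indicator {0<..<T} t * (1 - H t)"
      proof (cases "0 < t \<and> t < T")
        case True
        have "(\<lambda>n. H (g n t)) \<longlonglongrightarrow> H t"
          using step_conv[OF Hc T, of t] True by (simp add: g_def)
        then have "(\<lambda>n. 1 - H (g n t)) \<longlonglongrightarrow> 1 - H t" by (intro tendsto_intros)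
        then show ?thesis using True by simp
      next
        case False
        then have "indicator {0..<T} t = (0::real)" "indicator {0<..<T} t = (0::real)"
          using t0 by (auto simp: indicator_def)
        then show ?thesis by simp
      qed
    qed
    show "AE t in lborel. norm (indicator {0..<T} t * (1 - H (g n t))) \<le> indicator {0..<T} t" for n
      using H0 H1 by (auto simp: indicator_def abs_le_iff intro!: AE_I2)
  qed
  then show ?thesis using integ by (simp add: set_lebesgue_integral_def)
qed

lemma (in prob_space) pgf_ball:
  fixes X :: "nat \<Rightarrow> 'a \<Rightarrow> real \<times> real" and H :: "real \<Rightarrow> real"
  assumes PP: "poisson_pp M lam X" and lam: "0 \<le> lam"
    and Hm[measurable]: "H \<in> borel_measurable borel" and Hc: "continuous_on {0<..} H"
    and H0: "\<And>t. 0 \<le> H t" and H1: "\<And>t. H t \<le> 1" and T: "0 < T"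
  shows "(\<lambda>\<omega>. \<Prod>k\<in>{k. X k \<omega> \<in> ball 0 (sqrt T)}. H (norm (X k \<omega>) ^ 2)) \<in> borel_measurable M"
    and "expectation (\<lambda>\<omega>. \<Prod>k\<in>{k. X k \<omega> \<in> ball 0 (sqrt T)}. H (norm (X k \<omega>) ^ 2))
           = exp (- lam * pi * (LINT t:{0<..<T}|lborel. 1 - H t))"
proof -
  have Xm[measurable]: "\<And>k. X k \<in> borel_measurable M" using PP by (simp add: poisson_pp_def)
  have fin: "\<And>\<omega> A. \<omega> \<in> space M \<Longrightarrow> bounded A \<Longrightarrow> finite {k. X k \<omega> \<in> A}"
    using PP by (simp add: poisson_pp_def)
  note P3 = PP[unfolded poisson_pp_def, THEN conjunct2, THEN conjunct2]
  have pois: "indep_vars (\<lambda>_. count_space UNIV) (\<lambda>i. pp_count X (As i)) {..<n} \<and>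
      (\<forall>i<n. \<forall>m::nat. measure M {\<omega> \<in> space M. pp_count X (As i) \<omega> = m}
         = (lam * measure lborel (As i)) ^ m / fact m * exp (- (lam * measure lborel (As i))))"
    if h: "(\<forall>i<n. As i \<in> sets lborel \<and> bounded (As i)) \<and> disjoint_family_on As {..<n}"
    for As :: "nat \<Rightarrow> (real \<times> real) set" and n :: nat
    by (rule mp[OF spec[OF spec[OF P3, of As], of n] h])
  define F where "F \<omega> = {k. X k \<omega> \<in> ball 0 (sqrt T)}" for \<omega>
  define q where "q \<omega> = (\<Prod>k\<in>F \<omega>. H (norm (X k \<omega>) ^ 2))" for \<omega>
  define A where "A m i = {x::real\<times>real. T * real i / real m \<le> norm x ^ 2 \<and> norm x ^ 2 < T * (real i + 1) / real m}" for m i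
  define idx where "idx m t = nat \<lfloor>t * real m / T\<rfloor>" for m t
  define c where "c m i = H (T * real i / real m)" for m i
  define N where "N m = (\<lambda>i. pp_count X (A m i))" for m
  define Q where "Q m \<omega> = (\<Prod>i<m. c m i ^ N m i \<omega>)" for m \<omega>
  have c01: "0 \<le> c m i" "c m i \<le> 1" for m i using H0 H1 by (auto simp: c_def)
  have Aprops: "A m i \<in> sets lborel \<and> bounded (A m i) \<and> measure lborel (A m i) = pi * (T / real m)"
    if "0 < m" for m i
  proof -
    have a0: "0 \<le> T * real i / real m" using T by simp
    have ab: "T * real i / real m \<le> T * (real i + 1) / real m"
      using T that by (intro divide_right_mono mult_left_mono) auto
    have "T * (real i + 1) / real m - T * real i / real m = T / real m"
      by (simp add: diff_divide_distrib[symmetric] distrib_left)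
    then show ?thesis using annulus_props[OF a0 ab] unfolding A_def by simp
  qed
  have memA: "x \<in> A m i \<longleftrightarrow> idx m (norm x ^ 2) = i" if "0 < m" for m i x
    using floor_idx[OF T that, of "norm x ^ 2" i] by (simp add: A_def idx_def)
  have memB: "x \<in> ball 0 (sqrt T) \<longleftrightarrow> idx m (norm x ^ 2) < m" if "0 < m" for m x
    using idx_less[OF T that, of "norm x ^ 2"] T norm_lt_sqrt_iff[of T x] by (simp add: idx_def)
  have disj: "disjoint_family_on (A m) {..<m}" if "0 < m" for m
    unfolding disjoint_family_on_def using memA[OF that] by auto
  have PPm: "indep_vars (\<lambda>_. count_space UNIV) (N m) {..<m} \<and>
      (\<forall>i<m. \<forall>j::nat. measure M {\<omega> \<in> space M. N m i \<omega> = j}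
         = (lam * measure lborel (A m i)) ^ j / fact j * exp (- (lam * measure lborel (A m i))))"
    if "0 < m" for m
  proof -
    have h: "(\<forall>i<m. A m i \<in> sets lborel \<and> bounded (A m i)) \<and> disjoint_family_on (A m) {..<m}"
      using Aprops[OF that] disj[OF that] by simp
    show ?thesis unfolding N_def by (rule pois[OF h])
  qed
  have Nm: "N m i \<in> measurable M (count_space UNIV)" if "0 < m" "i < m" for m i
  proof -
    have "\<forall>i\<in>{..<m}. random_variable (count_space UNIV) (N m i)"
      using PPm[OF that(1), THEN conjunct1] unfolding indep_vars_def2 by (rule conjunct1)
    then show ?thesis using that(2) by simp
  qed
  have cNm: "(\<lambda>\<omega>. c m i ^ N m i \<omega>) \<in> borel_measurable M" if "0 < m" "i < m" for m i
    by (rule measurable_compose[OF Nm[OF that]]) simp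
  have Qm: "Q m \<in> borel_measurable M" if "0 < m" for m
    unfolding Q_def using cNm[OF that] by (intro borel_measurable_prod) auto
  have Q01: "0 \<le> Q m \<omega> \<and> Q m \<omega> \<le> 1" for m \<omega>
    unfolding Q_def using c01 by (auto intro!: prod_nonneg prod_le_1 power_le_one)
  have stepQ: "(\<Prod>k\<in>F \<omega>. H (T * real (idx m (norm (X k \<omega>) ^ 2)) / real m)) = Q m \<omega>"
    if m: "0 < m" and \<omega>: "\<omega> \<in> space M" for m \<omega>
  proof -
    define S where "S i = {k. X k \<omega> \<in> A m i}" for i
    have FU: "F \<omega> = (\<Union>i\<in>{..<m}. S i)"
    proof (rule set_eqI)
      fix k
      show "k \<in> F \<omega> \<longleftrightarrow> k \<in> (\<Union>i\<in>{..<m}. S i)"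
        using memA[OF m, of "X k \<omega>"] memB[OF m, of "X k \<omega>"] by (auto simp: F_def S_def)
    qed
    have finS: "finite (S i)" for i unfolding S_def using fin[OF \<omega>] Aprops[OF m] by blast
    have dS: "\<forall>i\<in>{..<m}. \<forall>j\<in>{..<m}. i \<noteq> j \<longrightarrow> S i \<inter> S j = {}"
      using memA[OF m] by (auto simp: S_def)
    have "(\<Prod>k\<in>F \<omega>. H (T * real (idx m (norm (X k \<omega>) ^ 2)) / real m))
        = (\<Prod>i<m. \<Prod>k\<in>S i. H (T * real (idx m (norm (X k \<omega>) ^ 2)) / real m))"
      unfolding FU by (rule prod.UNION_disjoint) (use finS dS in auto)
    also have "\<dots> = (\<Prod>i<m. \<Prod>k\<in>S i. c m i)"
      by (intro prod.cong refl) (auto simp: S_def memA[OF m] c_def)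
    also have "\<dots> = Q m \<omega>" by (simp add: Q_def N_def S_def pp_count_def)
    finally show ?thesis .
  qed
  have EQ: "expectation (Q m) = exp (- lam * pi * (\<Sum>i<m. T / real m * (1 - c m i)))"
    if m: "0 < m" for m
  proof -
    have IV: "indep_vars (\<lambda>_. borel) (\<lambda>i \<omega>. c m i ^ N m i \<omega>) {..<m}"
      by (rule indep_vars_compose2[OF PPm[OF m, THEN conjunct1]]) simp
    have "expectation (Q m) = (\<Prod>i<m. expectation (\<lambda>\<omega>. c m i ^ N m i \<omega>))"
      unfolding Q_def
    proof (rule indep_vars_lebesgue_integral[OF _ IV])
      show "finite {..<m}" by simp
      show "integrable M (\<lambda>\<omega>. c m i ^ N m i \<omega>)" if "i \<in> {..<m}" for i
        using cNm[OF m, of i] that c01[of m i]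
        by (intro integrable_const_bound[where B=1]) (auto intro!: power_le_one)
    qed
    also have "\<dots> = (\<Prod>i<m. exp (- (lam * (pi * (T / real m))) * (1 - c m i)))"
    proof (intro prod.cong refl)
      fix i assume i: "i \<in> {..<m}"
      have mA: "measure lborel (A m i) = pi * (T / real m)" using Aprops[OF m] by blast
      have i': "i < m" using i by simp
      have mu0: "0 \<le> lam * (pi * (T / real m))" using lam T by simp
      have dist: "measure M {\<omega> \<in> space M. N m i \<omega> = j} = (lam * (pi * (T / real m))) ^ j / fact j * exp (- (lam * (pi * (T / real m))))" for j
        using PPm[OF m, THEN conjunct2, rule_format, OF i', of j] unfolding mA .
      show "expectation (\<lambda>\<omega>. c m i ^ N m i \<omega>) = exp (- (lam * (pi * (T / real m))) * (1 - c m i))"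
        by (rule poisson_pgf[OF Nm[OF m i'] mu0 c01 dist])
    qed
    also have "\<dots> = exp (\<Sum>i<m. - (lam * (pi * (T / real m))) * (1 - c m i))"
      by (simp add: exp_sum)
    also have "(\<Sum>i<m. - (lam * (pi * (T / real m))) * (1 - c m i)) = - lam * pi * (\<Sum>i<m. T / real m * (1 - c m i))"
      unfolding sum_distrib_left by (intro sum.cong refl) (use m in \<open>simp add: field_simps\<close>)
    finally show ?thesis .
  qed
  have conv: "(\<lambda>n. Q (Suc n) \<omega>) \<longlonglongrightarrow> q \<omega>" if \<omega>: "\<omega> \<in> space M" for \<omega>
  proof -
    have "(\<lambda>n. \<Prod>k\<in>F \<omega>. H (T * real (idx (Suc n) (norm (X k \<omega>) ^ 2)) / real (Suc n))) \<longlonglongrightarrow> q \<omega>"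
      unfolding q_def idx_def by (intro tendsto_prod step_conv[OF Hc T]) simp
    moreover have "(\<lambda>n. Q (Suc n) \<omega>) = (\<lambda>n. \<Prod>k\<in>F \<omega>. H (T * real (idx (Suc n) (norm (X k \<omega>) ^ 2)) / real (Suc n)))"
      by (rule ext) (rule stepQ[symmetric, OF zero_less_Suc \<omega>])
    ultimately show ?thesis by simp
  qed
  have qm: "q \<in> borel_measurable M"
    by (rule borel_measurable_LIMSEQ_real[OF conv Qm]) simp_all
  have lim1: "(\<lambda>n. expectation (Q (Suc n))) \<longlonglongrightarrow> expectation q"
  proof (rule integral_dominated_convergence[where w="\<lambda>_. 1"])
    show "q \<in> borel_measurable M" by (rule qm)
    show "Q (Suc n) \<in> borel_measurable M" for n by (rule Qm) simp
    show "integrable M (\<lambda>_. 1::real)" by simp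
    show "AE x in M. (\<lambda>n. Q (Suc n) x) \<longlonglongrightarrow> q x" using conv by (intro AE_I2)
    show "AE x in M. norm (Q (Suc n) x) \<le> 1" for n using Q01 by (intro AE_I2) auto
  qed
  have lim2: "(\<lambda>n. expectation (Q (Suc n))) \<longlonglongrightarrow> exp (- lam * pi * (LINT t:{0<..<T}|lborel. 1 - H t))"
  proof -
    have "(\<lambda>n. exp (- lam * pi * (\<Sum>i<Suc n. T / real (Suc n) * (1 - c (Suc n) i))))
        \<longlonglongrightarrow> exp (- lam * pi * (LINT t:{0<..<T}|lborel. 1 - H t))"
      unfolding c_def by (intro tendsto_intros riemann_step[OF Hm Hc H0 H1 T])
    then show ?thesis by (subst EQ) simp_all
  qed
  show "(\<lambda>\<omega>. \<Prod>k\<in>{k. X k \<omega> \<in> ball 0 (sqrt T)}. H (norm (X k \<omega>) ^ 2)) \<in> borel_measurable M"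
    using qm unfolding q_def F_def .
  show "expectation (\<lambda>\<omega>. \<Prod>k\<in>{k. X k \<omega> \<in> ball 0 (sqrt T)}. H (norm (X k \<omega>) ^ 2))
           = exp (- lam * pi * (LINT t:{0<..<T}|lborel. 1 - H t))"
    using LIMSEQ_unique[OF lim1 lim2] unfolding q_def F_def .
qed

lemma (in prob_space) pgf_main:
  fixes X :: "nat \<Rightarrow> 'a \<Rightarrow> real \<times> real" and H :: "real \<Rightarrow> real"
  assumes PP: "poisson_pp M lam X" and lam: "0 \<le> lam"
    and Hm[measurable]: "H \<in> borel_measurable borel" and Hc: "continuous_on {0<..} H"
    and H0: "\<And>t. 0 \<le> H t" and H1: "\<And>t. H t \<le> 1"
    and Hi: "set_integrable lborel {0<..} (\<lambda>t. 1 - H t)"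
  shows "(\<lambda>n. expectation (\<lambda>\<omega>. \<Prod>k<n. H (norm (X k \<omega>) ^ 2)))
           \<longlonglongrightarrow> exp (- lam * pi * (LINT t:{0<..}|lborel. 1 - H t))"
proof -
  have Xm[measurable]: "\<And>k. X k \<in> borel_measurable M" using PP by (simp add: poisson_pp_def)
  have fin: "\<And>\<omega> A. \<omega> \<in> space M \<Longrightarrow> bounded A \<Longrightarrow> finite {k. X k \<omega> \<in> A}"
    using PP by (simp add: poisson_pp_def)
  define a where "a \<omega> k = H (norm (X k \<omega>) ^ 2)" for \<omega> k
  define F where "F \<omega> R = {k. X k \<omega> \<in> ball 0 (sqrt (real (Suc R) ^ 2))}" for \<omega> R
  define L where "L \<omega> = lim (\<lambda>n. \<Prod>k<n. a \<omega> k)" for \<omega>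
  have a01: "0 \<le> a \<omega> k" "a \<omega> k \<le> 1" for \<omega> k using H0 H1 by (auto simp: a_def)
  have Feq: "F \<omega> R = {k. X k \<omega> \<in> ball 0 (real (Suc R))}" for \<omega> R
    by (simp add: F_def)
  have lims: "(\<lambda>n. \<Prod>k<n. a \<omega> k) \<longlonglongrightarrow> L \<omega> \<and> (\<lambda>R. \<Prod>k\<in>F \<omega> R. a \<omega> k) \<longlonglongrightarrow> L \<omega>"
    if \<omega>: "\<omega> \<in> space M" for \<omega>
  proof -
    have fF: "finite (F \<omega> R)" for R unfolding Feq by (rule fin[OF \<omega>]) simp
    have mF: "F \<omega> R \<subseteq> F \<omega> R'" if "R \<le> R'" for R R'
      unfolding Feq using that by (auto simp: subset_ball)
    have cF: "\<exists>R. k \<in> F \<omega> R" for k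
    proof -
      obtain n :: nat where "norm (X k \<omega>) < real n" using reals_Archimedean2 by blast
      then have "X k \<omega> \<in> ball 0 (real (Suc n))" by simp
      then show ?thesis unfolding Feq by blast
    qed
    from prod_lim_finite_sets[of "a \<omega>" "F \<omega>", OF a01 fF mF cF]
    show ?thesis by (simp add: L_def)
  qed
  have pm: "(\<lambda>\<omega>. \<Prod>k<n. a \<omega> k) \<in> borel_measurable M" for n
    unfolding a_def by measurable
  have Lm: "L \<in> borel_measurable M"
    by (rule borel_measurable_LIMSEQ_real[where u="\<lambda>n \<omega>. \<Prod>k<n. a \<omega> k"]) (use lims pm in blast)+
  have pb: "norm (\<Prod>k\<in>S. a \<omega> k) \<le> 1" for S \<omega>
  proof -
    have "0 \<le> (\<Prod>k\<in>S. a \<omega> k)" by (rule prod_nonneg) (use a01 in auto)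
    moreover have "(\<Prod>k\<in>S. a \<omega> k) \<le> 1" by (rule prod_le_1) (use a01 in auto)
    ultimately show ?thesis by simp
  qed
  have E1: "(\<lambda>n. expectation (\<lambda>\<omega>. \<Prod>k<n. a \<omega> k)) \<longlonglongrightarrow> expectation L"
  proof (rule integral_dominated_convergence[where w="\<lambda>_. 1"])
    show "L \<in> borel_measurable M" by (rule Lm)
    show "(\<lambda>\<omega>. \<Prod>k<n. a \<omega> k) \<in> borel_measurable M" for n by (rule pm)
    show "integrable M (\<lambda>_. 1::real)" by simp
    show "AE x in M. (\<lambda>n. \<Prod>k<n. a x k) \<longlonglongrightarrow> L x" using lims by (intro AE_I2) blast
    show "AE x in M. norm (\<Prod>k<n. a x k) \<le> 1" for n using pb by (intro AE_I2) auto
  qed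
  have TR: "0 < real (Suc R) ^ 2" for R by simp
  have qm: "(\<lambda>\<omega>. \<Prod>k\<in>F \<omega> R. a \<omega> k) \<in> borel_measurable M" for R
    using pgf_ball(1)[OF PP lam Hm Hc H0 H1 TR[of R]] unfolding F_def a_def .
  have qE: "expectation (\<lambda>\<omega>. \<Prod>k\<in>F \<omega> R. a \<omega> k)
      = exp (- lam * pi * (LINT t:{0<..<real (Suc R) ^ 2}|lborel. 1 - H t))" for R
    using pgf_ball(2)[OF PP lam Hm Hc H0 H1 TR[of R]] unfolding F_def a_def .
  have E2: "(\<lambda>R. expectation (\<lambda>\<omega>. \<Prod>k\<in>F \<omega> R. a \<omega> k)) \<longlonglongrightarrow> expectation L"
  proof (rule integral_dominated_convergence[where w="\<lambda>_. 1"])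
    show "L \<in> borel_measurable M" by (rule Lm)
    show "(\<lambda>\<omega>. \<Prod>k\<in>F \<omega> R. a \<omega> k) \<in> borel_measurable M" for R by (rule qm)
    show "integrable M (\<lambda>_. 1::real)" by simp
    show "AE x in M. (\<lambda>R. \<Prod>k\<in>F x R. a x k) \<longlonglongrightarrow> L x" using lims by (intro AE_I2) blast
    show "AE x in M. norm (\<Prod>k\<in>F x R. a x k) \<le> 1" for R using pb by (intro AE_I2) auto
  qed
  define A where "A R = {0<..<real (Suc R) ^ 2}" for R
  have UA: "(\<Union>R. A R) = {0<..}"
  proof (rule set_eqI)
    fix t :: real
    show "t \<in> (\<Union>R. A R) \<longleftrightarrow> t \<in> {0<..}"
    proof
      assume "t \<in> {0<..}"
      then have t0: "0 < t" by simp
      obtain n :: nat where n: "t < real n" using reals_Archimedean2 by blast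
      have "real n \<le> real (Suc n)" by simp
      also have "real (Suc n) \<le> real (Suc n) ^ 2" by (simp add: power2_eq_square)
      finally have "t < real (Suc n) ^ 2" using n by linarith
      then show "t \<in> (\<Union>R. A R)" using t0 by (auto simp: A_def)
    qed (auto simp: A_def)
  qed
  have incA: "incseq A"
    unfolding incseq_def A_def
  proof (intro allI impI subsetI)
    fix m n :: nat and x :: real assume mn: "m \<le> n" and x: "x \<in> {0<..<real (Suc m) ^ 2}"
    have le: "real (Suc m) ^ 2 \<le> real (Suc n) ^ 2" using mn by (intro power_mono) auto
    have x1: "0 < x" "x < real (Suc m) ^ 2" using x greaterThanLessThan_iff by blast+
    have x2: "x < real (Suc n) ^ 2" using x1(2) le by (rule less_le_trans)
    show "x \<in> {0<..<real (Suc n) ^ 2}" using x1(1) x2 greaterThanLessThan_iff by blast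
  qed
  have I: "(\<lambda>R. LINT t:A R|lborel. 1 - H t) \<longlonglongrightarrow> (LINT t:{0<..}|lborel. 1 - H t)"
    using set_integral_cont_up[of A lborel "\<lambda>t. 1 - H t", OF _ incA] Hi UA
    by (simp add: A_def)
  have E3: "(\<lambda>R. expectation (\<lambda>\<omega>. \<Prod>k\<in>F \<omega> R. a \<omega> k)) \<longlonglongrightarrow> exp (- lam * pi * (LINT t:{0<..}|lborel. 1 - H t))"
    unfolding qE using I unfolding A_def by (intro tendsto_intros)
  have "expectation L = exp (- lam * pi * (LINT t:{0<..}|lborel. 1 - H t))"
    by (rule LIMSEQ_unique[OF E2 E3])
  then show ?thesis using E1 by (simp add: a_def)
qed

definition Hfun :: "real \<Rightarrow> real \<Rightarrow> nat \<Rightarrow> real \<Rightarrow> real" where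
  "Hfun a c Psi t = (if t \<le> 0 then 0 else (t powr a / (t powr a + c)) ^ Psi)"

lemma Hfun_measurable[measurable]: "Hfun a c Psi \<in> borel_measurable borel"
  unfolding Hfun_def by measurable

lemma Hfun_bounds:
  assumes c: "0 < c" shows "0 \<le> Hfun a c Psi t" and "Hfun a c Psi t \<le> 1"
proof -
  have pc: "0 < t powr a + c" using c by (intro add_nonneg_pos) auto
  have "0 \<le> t powr a / (t powr a + c)" using c by (intro divide_nonneg_nonneg) auto
  moreover have "t powr a / (t powr a + c) \<le> 1" using c pc by (simp add: divide_le_eq_1)
  ultimately show "0 \<le> Hfun a c Psi t" "Hfun a c Psi t \<le> 1"
    by (auto simp: Hfun_def power_le_one)
qed

lemma Hfun_cont:
  assumes c: "0 < c" shows "continuous_on {0<..} (Hfun a c Psi)"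
proof -
  have pc: "0 < t powr a + c" for t using c by (intro add_nonneg_pos) auto
  have pc': "t powr a + c \<noteq> 0" for t using pc[of t] by linarith
  have "continuous_on {0<..} (\<lambda>t. (t powr a / (t powr a + c)) ^ Psi)"
    using pc' by (intro continuous_intros) auto
  moreover have "continuous_on {0<..} (Hfun a c Psi) = continuous_on {0<..} (\<lambda>t. (t powr a / (t powr a + c)) ^ Psi)"
    by (rule continuous_on_cong) (simp_all add: Hfun_def)
  ultimately show ?thesis by simp
qed

lemma beta_set_integral:
  fixes p q :: real
  assumes p: "0 < p" and q: "0 < q"
  shows "set_integrable lborel {0<..<1} (\<lambda>t. t powr (p - 1) * (1 - t) powr (q - 1))"
    and "(LINT t:{0<..<1}|lborel. t powr (p - 1) * (1 - t) powr (q - 1)) = Beta p q"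
proof -
  let ?f = "\<lambda>t::real. t powr (p - 1) * (1 - t) powr (q - 1)"
  have hi: "(?f has_integral Beta p q) {0<..<1}"
    using has_integral_Beta_real[OF p q] by (simp add: has_integral_Icc_iff_Ioo)
  have ai: "?f absolutely_integrable_on {0<..<1}"
    using hi by (intro nonnegative_absolutely_integrable_1) (auto simp: has_integral_integrable)
  have meas: "(\<lambda>x. indicator {0<..<1} x *\<^sub>R ?f x) \<in> borel_measurable lborel" by measurable
  show si: "set_integrable lborel {0<..<1} ?f"
    using ai unfolding set_integrable_def using integrable_completion[OF meas] by simp
  have "(LINT t:{0<..<1}|lborel. ?f t) = integral {0<..<1} ?f"
    by (rule set_borel_integral_eq_integral(2)[OF si])
  also have "\<dots> = Beta p q" using hi by (rule integral_unique)
  finally show "(LINT t:{0<..<1}|lborel. ?f t) = Beta p q" .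
qed

lemma one_minus_pow_binomial:
  fixes v :: real
  shows "1 - v ^ Psi = (\<Sum>m=1..Psi. real (Psi choose m) * (1 - v) ^ m * v ^ (Psi - m))"
proof -
  have "1 = ((1 - v) + v) ^ Psi" by simp
  also have "\<dots> = (\<Sum>m\<le>Psi. real (Psi choose m) * (1 - v) ^ m * v ^ (Psi - m))"
    by (rule binomial_ring)
  also have "\<dots> = (\<Sum>m=0..Psi. real (Psi choose m) * (1 - v) ^ m * v ^ (Psi - m))"
    by (simp only: atMost_atLeast0)
  also have "\<dots> = v ^ Psi + (\<Sum>m=Suc 0..Psi. real (Psi choose m) * (1 - v) ^ m * v ^ (Psi - m))"
    by (subst sum.atLeast_Suc_atMost) simp_all
  finally show ?thesis by simp
qed

lemma powr_aux1:
  fixes w d :: real assumes w: "0 < w"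
  shows "1 / (w powr (d - 1) * w ^ 2) = w powr (- d - 1)"
proof -
  have e1: "w powr (d - 1) * w powr 2 = w powr (d + 1)"
    by (subst powr_add[symmetric]) (simp add: add.commute)
  have e2: "w powr 2 = w ^ 2" using w by simp
  have "1 / (w powr (d - 1) * w ^ 2) = 1 / w powr (d + 1)" using e1 e2 by simp
  also have "\<dots> = w powr (- d - 1)"
  proof -
    have "- d - 1 = - (d + 1)" by simp
    then show ?thesis by (simp only: powr_minus_divide)
  qed
  finally show ?thesis .
qed

lemma powr_at_top_aux:
  assumes "(p::real) > 0"
  shows "filterlim (\<lambda>x. x powr p) at_top at_top"
proof (subst filterlim_cong[OF refl refl])
  show "LIM x at_top. exp (p * ln x) :> at_top"
    by (rule filterlim_compose[OF exp_at_top filterlim_tendsto_pos_mult_at_top[OF tendsto_const]])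
       (simp_all add: ln_at_top assms)
  show "eventually (\<lambda>x. x powr p = exp (p * ln x)) at_top"
    using eventually_gt_at_top[of 0] by eventually_elim (simp add: powr_def)
qed

lemma Hfun_integral:
  fixes a c d :: real and Psi :: nat
  assumes d0: "0 < d" and d1: "d < 1" and ad: "a * d = 1" and c: "0 < c" and Psi: "1 \<le> Psi"
  shows "set_integrable lborel {0<..} (\<lambda>t. 1 - Hfun a c Psi t)"
    and "(LINT t:{0<..}|lborel. 1 - Hfun a c Psi t)
           = c powr d * d * (\<Sum>m=1..Psi. real (Psi choose m) * Beta (real Psi - real m + d) (real m - d))"
proof -
  define f where "f = (\<lambda>t. 1 - Hfun a c Psi t)"
  define u where "u = (\<lambda>v::real. c * v / (1 - v))"
  define g where "g = (\<lambda>v. u v powr d)"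
  define g' where "g' = (\<lambda>v. d * u v powr (d - 1) * (c / (1 - v) ^ 2))"
  define \<beta> where "\<beta> m v = v powr (real Psi - real m + d - 1) * (1 - v) powr (real m - d - 1)" for m v
  define B where "B v = c powr d * d * (\<Sum>m=1..Psi. real (Psi choose m) * \<beta> m v)" for v
  have upos: "0 < u v" if "0 < v" "v < 1" for v using that c by (simp add: u_def)
  have gpos: "0 < g v" if "0 < v" "v < 1" for v using upos[OF that] by (simp add: g_def)
  have u_der: "(u has_real_derivative c / (1 - v) ^ 2) (at v)" if "v \<noteq> 1" for v
    unfolding u_def using that
    by (auto intro!: derivative_eq_intros simp: field_simps power2_eq_square)
  have g_der: "(g has_real_derivative g' v) (at v)" if v: "0 < v" "v < 1" for v
  proof -
    have ud: "(u has_real_derivative c / (1 - v) ^ 2) (at v)" using v by (intro u_der) auto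
    show ?thesis unfolding g_def g'_def using DERIV_fun_powr[OF ud upos[OF v], of d] by simp
  qed
  have Hg: "Hfun a c Psi (g v) = v ^ Psi" if v: "0 < v" "v < 1" for v
  proof -
    have gp: "g v powr a = u v" unfolding g_def using upos[OF v] ad
      by (simp add: powr_powr mult.commute[of d a])
    have uv: "u v / (u v + c) = v" unfolding u_def using v c by (simp add: field_simps)
    show ?thesis using gpos[OF v] gp uv by (simp add: Hfun_def)
  qed
  have gen1: "\<And>A V W (w::real). W \<noteq> 0 \<Longrightarrow> w \<noteq> 0 \<Longrightarrow>
      d * (A * V / W) * (c / w ^ 2) = d * (A * c) * V * (1 / (W * w ^ 2))"
    by (simp add: field_simps)
  have cc: "c powr (d - 1) * c = c powr d"
  proof -
    have "c powr (d - 1) * c powr 1 = c powr d" by (subst powr_add[symmetric]) simp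
    then show ?thesis using c by simp
  qed
  have g'eq: "g' v = d * c powr d * v powr (d - 1) * (1 - v) powr (- d - 1)" if v: "0 < v" "v < 1" for v
  proof -
    have w: "0 < 1 - v" using v by simp
    have "u v powr (d - 1) = c powr (d - 1) * v powr (d - 1) / (1 - v) powr (d - 1)"
      unfolding u_def by (simp add: powr_divide powr_mult)
    then have "g' v = d * (c powr (d - 1) * v powr (d - 1) / (1 - v) powr (d - 1)) * (c / (1 - v) ^ 2)"
      by (simp add: g'_def)
    also have "\<dots> = d * (c powr (d - 1) * c) * v powr (d - 1) * (1 / ((1 - v) powr (d - 1) * (1 - v) ^ 2))"
      using w by (intro gen1) auto
    also have "\<dots> = d * c powr d * v powr (d - 1) * (1 - v) powr (- d - 1)"
      by (simp only: cc powr_aux1[OF w])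
    finally show ?thesis .
  qed
  have fg: "f (g v) * g' v = B v" if v: "0 < v" "v < 1" for v
  proof -
    have w: "0 < 1 - v" using v by simp
    have t1: "v ^ (Psi - m) * v powr (d - 1) = v powr (real Psi - real m + d - 1)" if "m \<in> {1..Psi}" for m
    proof -
      have "v ^ (Psi - m) = v powr (real Psi - real m)"
        using that v by (simp add: powr_realpow[symmetric] of_nat_diff)
      then show ?thesis by (simp add: powr_add[symmetric] algebra_simps)
    qed
    have t2: "(1 - v) ^ m * (1 - v) powr (- d - 1) = (1 - v) powr (real m - d - 1)" for m
    proof -
      have "(1 - v) ^ m = (1 - v) powr (real m)" using w by (simp add: powr_realpow)
      then show ?thesis by (simp add: powr_add[symmetric] algebra_simps)
    qed
    have "f (g v) * g' v = (\<Sum>m=1..Psi. real (Psi choose m) * (1 - v) ^ m * v ^ (Psi - m))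
          * (d * c powr d * v powr (d - 1) * (1 - v) powr (- d - 1))"
      by (simp add: f_def Hg[OF v] g'eq[OF v] one_minus_pow_binomial)
    also have "\<dots> = (\<Sum>m=1..Psi. c powr d * d * (real (Psi choose m) *
          ((v ^ (Psi - m) * v powr (d - 1)) * ((1 - v) ^ m * (1 - v) powr (- d - 1)))))"
      unfolding sum_distrib_right by (intro sum.cong refl) (simp add: mult_ac)
    also have "\<dots> = (\<Sum>m=1..Psi. c powr d * d * (real (Psi choose m) * \<beta> m v))"
      by (intro sum.cong refl) (simp add: t1 t2 \<beta>_def)
    also have "\<dots> = B v" by (simp add: B_def sum_distrib_left)
    finally show ?thesis .
  qed
  have pq: "0 < real Psi - real m + d" "0 < real m - d" if "m \<in> {1..Psi}" for m
    using that d0 d1 by auto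
  have bi: "integrable lborel (\<lambda>x. indicator {0<..<1} x *\<^sub>R \<beta> m x)" if "m \<in> {1..Psi}" for m
    using beta_set_integral(1)[OF pq[OF that]] unfolding set_integrable_def \<beta>_def by simp
  have bv: "(LINT x|lborel. indicator {0<..<1} x *\<^sub>R \<beta> m x) = Beta (real Psi - real m + d) (real m - d)"
    if "m \<in> {1..Psi}" for m
    using beta_set_integral(2)[OF pq[OF that]] unfolding set_lebesgue_integral_def \<beta>_def by simp
  have ptw: "indicator {0<..<1} x *\<^sub>R B x
      = c powr d * d * (\<Sum>m=1..Psi. real (Psi choose m) * (indicator {0<..<1} x *\<^sub>R \<beta> m x))" for x
    by (simp add: B_def sum_distrib_left mult_ac)
  have Bi: "set_integrable lborel {0<..<1} B"
    unfolding set_integrable_def ptw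
    by (intro integrable_mult_right integrable_sum) (use bi in auto)
  have Bv: "(LINT x:{0<..<1}|lborel. B x)
      = c powr d * d * (\<Sum>m=1..Psi. real (Psi choose m) * Beta (real Psi - real m + d) (real m - d))"
  proof -
    have "(LINT x:{0<..<1}|lborel. B x)
        = c powr d * d * (\<Sum>m=1..Psi. real (Psi choose m) * (LINT x|lborel. indicator {0<..<1} x *\<^sub>R \<beta> m x))"
      unfolding set_lebesgue_integral_def ptw
      by (subst integral_mult_right_zero, subst Bochner_Integration.integral_sum)
         (use bi in \<open>auto intro!: integrable_mult_right\<close>)
    also have "\<dots> = c powr d * d * (\<Sum>m=1..Psi. real (Psi choose m) * Beta (real Psi - real m + d) (real m - d))"
    proof (intro arg_cong2[where f="(*)"] refl sum.cong)
      fix m assume m: "m \<in> {1..Psi}"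
      show "(LINT x|lborel. indicator {0<..<1} x *\<^sub>R \<beta> m x)
          = Beta (real Psi - real m + d) (real m - d)"
        by (rule bv[OF m])
    qed
    finally show ?thesis .
  qed
  have Hc': "isCont (Hfun a c Psi) t" if "0 < t" for t
    using Hfun_cont[OF c, of a Psi] that by (simp add: continuous_on_eq_continuous_at)
  have glim0: "(g \<longlongrightarrow> 0) (at_right 0)"
  proof -
    have "(u \<longlongrightarrow> 0) (at_right 0)"
      unfolding u_def by (auto intro!: tendsto_eq_intros)
    moreover have "\<forall>\<^sub>F x in at_right 0. 0 \<le> u x"
      unfolding eventually_at_right_field
      by (intro exI[of _ 1]) (use c in \<open>auto simp: u_def\<close>)
    ultimately show ?thesis unfolding g_def
      by (rule tendsto_zero_powrI[OF _ tendsto_const]) (rule d0)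
  qed
  have glim1: "filterlim g at_top (at_left 1)"
  proof -
    have "filterlim (\<lambda>v. inverse (1 - v)) at_top (at_left (1::real))"
    proof (rule filterlim_inverse_at_top)
      show "((\<lambda>v. 1 - v) \<longlongrightarrow> (0::real)) (at_left 1)" by (auto intro!: tendsto_eq_intros)
      show "\<forall>\<^sub>F x in at_left 1. 0 < 1 - (x::real)"
        unfolding eventually_at_left_field by (intro exI[of _ 0]) auto
    qed
    moreover have cl: "((\<lambda>v. c * v) \<longlongrightarrow> c) (at_left (1::real))"
      by (auto intro!: tendsto_eq_intros)
    ultimately have "filterlim (\<lambda>v. (c * v) * inverse (1 - v)) at_top (at_left (1::real))"
      using filterlim_tendsto_pos_mult_at_top[OF cl c] by blast
    moreover have "u = (\<lambda>v. (c * v) * inverse (1 - v))" by (simp add: u_def divide_inverse)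
    ultimately have "filterlim u at_top (at_left 1)" by simp
    then show ?thesis unfolding g_def by (rule filterlim_compose[OF powr_at_top_aux[OF d0]])
  qed
  note sub = interval_integral_substitution_nonneg[where a="ereal 0" and b="ereal 1" and g=g and g'=g'
      and f=f and A="ereal 0" and B="\<infinity>"]
  have int_fg: "set_integrable lborel (einterval (ereal 0) (ereal 1)) (\<lambda>x. f (g x) * g' x)"
    using Bi by (subst set_integrable_cong[OF refl refl, where f'=B]) (auto simp: fg)
  have prems: "ereal 0 < ereal 1"
    "\<And>x. ereal 0 < ereal x \<Longrightarrow> ereal x < ereal 1 \<Longrightarrow> DERIV g x :> g' x"
    "\<And>x. ereal 0 < ereal x \<Longrightarrow> ereal x < ereal 1 \<Longrightarrow> isCont f (g x)"
    "\<And>x. ereal 0 < ereal x \<Longrightarrow> ereal x < ereal 1 \<Longrightarrow> isCont g' x"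
    "\<And>x. ereal 0 < ereal x \<Longrightarrow> ereal x < ereal 1 \<Longrightarrow> 0 \<le> f (g x)"
    "\<And>x. ereal 0 \<le> ereal x \<Longrightarrow> ereal x \<le> ereal 1 \<Longrightarrow> 0 \<le> g' x"
    "((ereal \<circ> g \<circ> real_of_ereal) \<longlongrightarrow> ereal 0) (at_right (ereal 0))"
    "((ereal \<circ> g \<circ> real_of_ereal) \<longlongrightarrow> \<infinity>) (at_left (ereal 1))"
  proof -
    show "ereal 0 < ereal 1" by simp
    show "DERIV g x :> g' x" if "ereal 0 < ereal x" "ereal x < ereal 1" for x
      using that by (intro g_der) auto
    show "isCont f (g x)" if "ereal 0 < ereal x" "ereal x < ereal 1" for x
    proof -
      have "0 < g x" using that by (intro gpos) auto
      then show ?thesis unfolding f_def by (intro continuous_intros Hc')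
    qed
    show "isCont g' x" if "ereal 0 < ereal x" "ereal x < ereal 1" for x
    proof -
      have x: "0 < x" "x < 1" using that by auto
      have "0 < u x" by (rule upos[OF x])
      then show ?thesis unfolding g'_def u_def using x
        by (auto intro!: continuous_intros)
    qed
    show "0 \<le> f (g x)" for x unfolding f_def using Hfun_bounds(2)[OF c] by simp
    show "0 \<le> g' x" for x unfolding g'_def using d0 c
      by (intro mult_nonneg_nonneg divide_nonneg_nonneg) auto
    show "((ereal \<circ> g \<circ> real_of_ereal) \<longlongrightarrow> ereal 0) (at_right (ereal 0))"
      using glim0 by (simp add: o_assoc ereal_tendsto_simps)
    show "((ereal \<circ> g \<circ> real_of_ereal) \<longlongrightarrow> \<infinity>) (at_left (ereal 1))"
      using glim1 by (simp add: o_assoc ereal_tendsto_simps)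
  qed
  note res = sub[OF prems int_fg]
  have ei: "einterval (ereal 0) \<infinity> = {0<..}" by (auto simp: einterval_def)
  have ei1: "einterval (ereal 0) (ereal 1) = {0<..<1}" by (auto simp: einterval_def)
  show "set_integrable lborel {0<..} (\<lambda>t. 1 - Hfun a c Psi t)"
    using res(1) unfolding ei f_def .
  have "(LINT t:{0<..}|lborel. 1 - Hfun a c Psi t) = (LBINT x=ereal 0..\<infinity>. f x)"
    by (simp add: interval_lebesgue_integral_def ei f_def)
  also have "\<dots> = (LBINT x=ereal 0..ereal 1. f (g x) * g' x)" by (rule res(2))
  also have "\<dots> = (LINT x:{0<..<1}|lborel. f (g x) * g' x)"
    by (simp add: interval_lebesgue_integral_def ei1)
  also have "\<dots> = (LINT x:{0<..<1}|lborel. B x)"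
    by (rule set_lebesgue_integral_cong) (auto simp: fg)
  finally show "(LINT t:{0<..}|lborel. 1 - Hfun a c Psi t)
           = c powr d * d * (\<Sum>m=1..Psi. real (Psi choose m) * Beta (real Psi - real m + d) (real m - d))"
    using Bv by simp
qed

lemma erlang_integral_one:
  assumes l: "0 < l"
  shows "integrable lborel (erlang_density k l)" and "(LINT x|lborel. erlang_density k l x) = 1"
proof -
  have nn: "(\<integral>\<^sup>+ x. ennreal (erlang_density k l x) \<partial>lborel) = 1"
    using nn_integral_erlang_ith_moment[OF l, of k 0] by simp
  show "integrable lborel (erlang_density k l)"
    using l nn by (intro integrableI_nonneg) auto
  show "(LINT x|lborel. erlang_density k l x) = 1"
    using l nn by (subst integral_eq_nn_integral) auto
qed

lemma erlang_laplace:
  assumes b: "0 \<le> b"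
  shows "(LINT u|lborel. erlang_density k 1 u * exp (- b * u)) = 1 / (1 + b) ^ Suc k"
proof -
  have b1: "0 < 1 + b" using b by simp
  have ex: "exp (- u) * exp (- b * u) = exp (- ((1 + b) * u))" for u
    by (simp add: exp_add[symmetric] algebra_simps)
  have eq: "erlang_density k 1 u * exp (- b * u) = erlang_density k (1 + b) u / (1 + b) ^ Suc k" for u
  proof (cases "u < 0")
    case True then show ?thesis by (simp add: erlang_density_def)
  next
    case False
    have "erlang_density k 1 u * exp (- b * u) = u ^ k * (exp (- u) * exp (- b * u)) / fact k"
      using False by (simp add: erlang_density_def)
    also have "\<dots> = u ^ k * exp (- ((1 + b) * u)) / fact k" by (simp only: ex)
    also have "\<dots> = u ^ k * exp (- (1 + b) * u) / fact k" by (simp only: mult_minus_left)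
    also have "\<dots> = ((1 + b) ^ Suc k * u ^ k * exp (- (1 + b) * u) / fact k) / (1 + b) ^ Suc k"
    proof -
      have gen: "\<And>Z A B F :: real. Z \<noteq> 0 \<Longrightarrow> (Z * A * B / F) / Z = A * B / F"
        by (simp add: field_simps)
      show ?thesis by (rule gen[symmetric]) (use b1 in simp)
    qed
    also have "\<dots> = erlang_density k (1 + b) u / (1 + b) ^ Suc k"
      using False by (simp add: erlang_density_def)
    finally show ?thesis .
  qed
  have "(LINT u|lborel. erlang_density k 1 u * exp (- b * u)) = (LINT u|lborel. erlang_density k (1 + b) u / (1 + b) ^ Suc k)"
    by (simp only: eq)
  also have "\<dots> = (LINT u|lborel. erlang_density k (1 + b) u) / (1 + b) ^ Suc k"
    by (rule integral_divide_zero)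
  also have "\<dots> = 1 / (1 + b) ^ Suc k" using erlang_integral_one(2)[OF b1] by simp
  finally show ?thesis .
qed

definition phi_mark :: "real \<Rightarrow> real \<Rightarrow> real \<Rightarrow> real \<times> real \<Rightarrow> real \<Rightarrow> real" where
  "phi_mark s P alpha x u = exp_neg s (if x = 0 then \<infinity> else ennreal (P * u * norm x powr (- alpha)))"

lemma phi_mark_measurable[measurable]:
  "(\<lambda>p. phi_mark s P alpha (fst p) (snd p)) \<in> borel_measurable (borel \<Otimes>\<^sub>M borel)"
  unfolding phi_mark_def by measurable

lemma phi_mark_measurable2[measurable]: "phi_mark s P alpha x \<in> borel_measurable borel"
  unfolding phi_mark_def by measurable

lemma phi_mark_bounds: "0 < s \<Longrightarrow> 0 \<le> phi_mark s P alpha x u \<and> phi_mark s P alpha x u \<le> 1"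
  unfolding phi_mark_def using exp_neg_nonneg exp_neg_le1 by auto

lemma mark_integral:
  assumes s: "0 < s" and P: "0 < P" and al: "0 < alpha" and Psi: "1 \<le> Psi"
  shows "(LINT u|density lborel (erlang_density (Psi - 1) 1). phi_mark s P alpha x u)
           = Hfun (alpha / 2) (s * P) Psi (norm x ^ 2)"
proof -
  have "(LINT u|density lborel (erlang_density (Psi - 1) 1). phi_mark s P alpha x u)
      = (LINT u|lborel. erlang_density (Psi - 1) 1 u * phi_mark s P alpha x u)"
    by (subst integral_density) auto
  also have "\<dots> = Hfun (alpha / 2) (s * P) Psi (norm x ^ 2)"
  proof (cases "x = 0")
    case True
    then show ?thesis by (simp add: phi_mark_def exp_neg_def Hfun_def)
  next
    case False
    define r where "r = norm x"
    have r: "0 < r" using False by (simp add: r_def)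
    define R where "R = r powr alpha"
    have R: "0 < R" using r by (simp add: R_def)
    define w where "w = r powr (- alpha)"
    have w: "w = 1 / R" by (simp add: w_def R_def powr_minus_divide)
    have w0: "0 < w" using R by (simp add: w)
    have pt: "erlang_density (Psi - 1) 1 u * phi_mark s P alpha x u
        = erlang_density (Psi - 1) 1 u * exp (- (s * P * w) * u)" for u
    proof (cases "u < 0")
      case True then show ?thesis by (simp add: erlang_density_def)
    next
      case False
      then have "0 \<le> P * u * w" using P w0 by simp
      then show ?thesis using False \<open>x \<noteq> 0\<close>
        by (simp add: phi_mark_def exp_neg_def w_def r_def algebra_simps)
    qed
    have "(LINT u|lborel. erlang_density (Psi - 1) 1 u * phi_mark s P alpha x u)
        = (LINT u|lborel. erlang_density (Psi - 1) 1 u * exp (- (s * P * w) * u))"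
      by (simp only: pt)
    also have "\<dots> = 1 / (1 + s * P * w) ^ Suc (Psi - 1)"
      using s P w0 by (intro erlang_laplace) simp
    also have "\<dots> = (R / (R + s * P)) ^ Psi"
    proof -
      have "Suc (Psi - 1) = Psi" using Psi by simp
      moreover have "1 / (1 + s * P * w) = R / (R + s * P)"
        using R by (simp add: w field_simps)
      moreover have "1 / (1 + s * P * w) ^ Psi = (1 / (1 + s * P * w)) ^ Psi"
        by (simp add: power_divide)
      ultimately show ?thesis by simp
    qed
    also have "\<dots> = Hfun (alpha / 2) (s * P) Psi (norm x ^ 2)"
    proof -
      have "(r ^ 2) powr (alpha / 2) = R"
      proof -
        have "r ^ 2 = r powr 2" using r by simp
        then have "(r ^ 2) powr (alpha / 2) = r powr (2 * (alpha / 2))" by (simp add: powr_powr)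
        then show ?thesis by (simp add: R_def)
      qed
      then show ?thesis using r by (simp add: Hfun_def r_def)
    qed
    finally show ?thesis .
  qed
  finally show ?thesis .
qed

lemma (in prob_space) mark_expectation:
  fixes X :: "nat \<Rightarrow> 'a \<Rightarrow> real \<times> real" and G :: "nat \<Rightarrow> 'a \<Rightarrow> real"
    and \<phi> :: "real \<times> real \<Rightarrow> real \<Rightarrow> real" and \<psi> :: "real \<times> real \<Rightarrow> real"
    and D :: "real measure" and n :: nat
  assumes Xm[measurable]: "\<And>k. X k \<in> borel_measurable M" and Gm[measurable]: "\<And>k. G k \<in> borel_measurable M"
    and ind1: "indep_var (PiM UNIV (\<lambda>_. borel)) (\<lambda>\<omega> k. X k \<omega>)
                 (PiM {..<n} (\<lambda>_. borel \<Otimes>\<^sub>M borel)) (\<lambda>\<omega>. \<lambda>k\<in>{..<n}. (G k \<omega>, 0::real))"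
    and ind2: "indep_vars (\<lambda>_. borel \<Otimes>\<^sub>M borel) (\<lambda>k \<omega>. (G k \<omega>, 0::real)) {..<n}"
    and dG: "\<And>k. distr M borel (G k) = D"
    and \<phi>m[measurable]: "(\<lambda>p. \<phi> (fst p) (snd p)) \<in> borel_measurable (borel \<Otimes>\<^sub>M borel)"
    and \<phi>b: "\<And>x u. 0 \<le> \<phi> x u \<and> \<phi> x u \<le> 1"
    and \<psi>: "\<And>x. (LINT u|D. \<phi> x u) = \<psi> x" and \<psi>m[measurable]: "\<psi> \<in> borel_measurable borel"
  shows "expectation (\<lambda>\<omega>. \<Prod>k<n. \<phi> (X k \<omega>) (G k \<omega>)) = expectation (\<lambda>\<omega>. \<Prod>k<n. \<psi> (X k \<omega>))"
proof (cases "n = 0")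
  case True then show ?thesis by simp
next
  case False
  define S where "S = (PiM UNIV (\<lambda>_::nat. borel :: (real \<times> real) measure))"
  define T where "T = (PiM {..<n} (\<lambda>_::nat. borel \<Otimes>\<^sub>M borel :: (real \<times> real) measure))"
  define Zx where "Zx = (\<lambda>\<omega> k. X k \<omega>)"
  define Zg where "Zg = (\<lambda>\<omega>. \<lambda>k\<in>{..<n}. (G k \<omega>, 0::real))"
  define \<Gamma> where "\<Gamma> = distr D (borel \<Otimes>\<^sub>M borel) (\<lambda>u::real. (u, 0::real))"
  define \<Phi> where "\<Phi> p = (\<Prod>k<n. \<phi> (fst p k) (fst (snd p k)))" for p :: "(nat \<Rightarrow> real \<times> real) \<times> (nat \<Rightarrow> real \<times> real)"
  have \<phi>c: "(\<lambda>z. \<phi> (f z) (g z)) \<in> borel_measurable N"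
    if "f \<in> measurable N borel" "g \<in> measurable N borel" for N :: "'c measure" and f g
    using measurable_compose[OF measurable_Pair[OF that] \<phi>m] by simp
  have Zxm[measurable]: "Zx \<in> measurable M S" unfolding Zx_def S_def
    by (rule measurable_PiM_single') auto
  have Zgm[measurable]: "Zg \<in> measurable M T" unfolding Zg_def T_def by measurable
  have D_eq: "D = distr M borel (G 0)" using dG by simp
  have Dprob: "prob_space D" unfolding D_eq by (rule prob_space_distr) simp
  have sD: "sets D = sets borel" unfolding D_eq by simp
  have pm: "(\<lambda>u::real. (u, 0::real)) \<in> measurable borel (borel \<Otimes>\<^sub>M borel)" by measurable
  have pmD: "(\<lambda>u::real. (u, 0::real)) \<in> measurable D (borel \<Otimes>\<^sub>M borel)"
    using pm by (simp add: measurable_cong_sets[OF sD refl])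
  have \<Gamma>k: "distr M (borel \<Otimes>\<^sub>M borel) (\<lambda>\<omega>. (G k \<omega>, 0::real)) = \<Gamma>" for k
  proof -
    have "distr (distr M borel (G k)) (borel \<Otimes>\<^sub>M borel) (\<lambda>u. (u, 0::real))
        = distr M (borel \<Otimes>\<^sub>M borel) ((\<lambda>u. (u, 0::real)) \<circ> G k)"
      by (rule distr_distr[OF pm]) simp
    then show ?thesis by (simp add: dG \<Gamma>_def comp_def)
  qed
  have \<Gamma>prob: "prob_space \<Gamma>" unfolding \<Gamma>_def by (rule prob_space.prob_space_distr[OF Dprob pmD])
  interpret G\<Gamma>: prob_space \<Gamma> by (rule \<Gamma>prob)
  have distr_joint: "distr M S Zx \<Otimes>\<^sub>M distr M T Zg = distr M (S \<Otimes>\<^sub>M T) (\<lambda>\<omega>. (Zx \<omega>, Zg \<omega>))"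
    using ind1 unfolding indep_var_distribution_eq S_def T_def Zx_def Zg_def by blast
  have distr_g: "distr M T Zg = PiM {..<n} (\<lambda>_. \<Gamma>)"
  proof -
    have "indep_vars (\<lambda>_. borel \<Otimes>\<^sub>M borel) (\<lambda>k \<omega>. (G k \<omega>, 0::real)) {..<n} \<longleftrightarrow>
        distr M (\<Pi>\<^sub>M i\<in>{..<n}. borel \<Otimes>\<^sub>M borel) (\<lambda>x. \<lambda>i\<in>{..<n}. (G i x, 0::real))
        = (\<Pi>\<^sub>M i\<in>{..<n}. distr M (borel \<Otimes>\<^sub>M borel) (\<lambda>\<omega>. (G i \<omega>, 0::real)))"
      by (rule indep_vars_iff_distr_eq_PiM') (use False in auto)
    then show ?thesis using ind2 by (simp add: T_def Zg_def \<Gamma>k)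
  qed
  have Dxp: "prob_space (distr M S Zx)" by (rule prob_space_distr) (rule Zxm)
  have Dgp: "prob_space (PiM {..<n} (\<lambda>_. \<Gamma>))" by (rule prob_space_PiM) (rule \<Gamma>prob)
  interpret PS: product_sigma_finite "\<lambda>_::nat. \<Gamma>"
    by (rule product_sigma_finite.intro) (rule prob_space_imp_sigma_finite[OF \<Gamma>prob])
  interpret PP: pair_prob_space "distr M S Zx" "PiM {..<n} (\<lambda>_. \<Gamma>)"
    by (simp add: pair_prob_space_def pair_sigma_finite_def prob_space_imp_sigma_finite Dxp Dgp)
  have \<Phi>m: "\<Phi> \<in> borel_measurable (S \<Otimes>\<^sub>M T)"
    unfolding \<Phi>_def S_def T_def by (intro borel_measurable_prod \<phi>c) measurable
  have \<Phi>b: "norm (\<Phi> p) \<le> 1" for p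
  proof -
    have "0 \<le> \<Phi> p" unfolding \<Phi>_def using \<phi>b by (intro prod_nonneg) auto
    moreover have "\<Phi> p \<le> 1" unfolding \<Phi>_def using \<phi>b by (intro prod_le_1) auto
    ultimately show ?thesis by simp
  qed
  have "expectation (\<lambda>\<omega>. \<Prod>k<n. \<phi> (X k \<omega>) (G k \<omega>)) = expectation (\<lambda>\<omega>. \<Phi> (Zx \<omega>, Zg \<omega>))"
    by (intro Bochner_Integration.integral_cong refl) (simp add: \<Phi>_def Zx_def Zg_def)
  also have "\<dots> = integral\<^sup>L (distr M (S \<Otimes>\<^sub>M T) (\<lambda>\<omega>. (Zx \<omega>, Zg \<omega>))) \<Phi>"
    by (rule integral_distr[symmetric]) (simp_all add: \<Phi>m)
  also have "\<dots> = integral\<^sup>L (distr M S Zx \<Otimes>\<^sub>M PiM {..<n} (\<lambda>_. \<Gamma>)) \<Phi>"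
    by (simp add: distr_joint[symmetric] distr_g)
  also have "\<dots> = integral\<^sup>L (distr M S Zx) (\<lambda>x. integral\<^sup>L (PiM {..<n} (\<lambda>_. \<Gamma>)) (\<lambda>y. \<Phi> (x, y)))"
  proof (rule PP.integral_fst'[symmetric])
    show "integrable (distr M S Zx \<Otimes>\<^sub>M PiM {..<n} (\<lambda>_. \<Gamma>)) \<Phi>"
    proof (rule PP.P.integrable_const_bound[where B=1])
      show "AE x in distr M S Zx \<Otimes>\<^sub>M PiM {..<n} (\<lambda>_. \<Gamma>). norm (\<Phi> x) \<le> 1" using \<Phi>b by simp
      have sets_eq: "sets (distr M S Zx \<Otimes>\<^sub>M PiM {..<n} (\<lambda>_. \<Gamma>)) = sets (S \<Otimes>\<^sub>M T)"
        by (intro sets_pair_measure_cong) (simp_all add: T_def \<Gamma>_def cong: sets_PiM_cong)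
      show "\<Phi> \<in> borel_measurable (distr M S Zx \<Otimes>\<^sub>M PiM {..<n} (\<lambda>_. \<Gamma>))"
        using \<Phi>m by (simp add: measurable_cong_sets[OF sets_eq refl])
    qed
  qed
  also have "\<dots> = integral\<^sup>L (distr M S Zx) (\<lambda>x. \<Prod>k<n. \<psi> (x k))"
  proof (intro Bochner_Integration.integral_cong refl)
    fix x assume "x \<in> space (distr M S Zx)"
    have "integral\<^sup>L (PiM {..<n} (\<lambda>_. \<Gamma>)) (\<lambda>y. \<Phi> (x, y)) = integral\<^sup>L (PiM {..<n} (\<lambda>_. \<Gamma>)) (\<lambda>y. \<Prod>k\<in>{..<n}. \<phi> (x k) (fst (y k)))"
      by (simp add: \<Phi>_def)
    also have "\<dots> = (\<Prod>k\<in>{..<n}. LINT y|\<Gamma>. \<phi> (x k) (fst y))"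
    proof (rule PS.product_integral_prod)
      show "finite {..<n}" by simp
      show "integrable \<Gamma> (\<lambda>y. \<phi> (x k) (fst y))" if "k \<in> {..<n}" for k
      proof (rule G\<Gamma>.integrable_const_bound[where B=1])
        show "AE y in \<Gamma>. norm (\<phi> (x k) (fst y)) \<le> 1" using \<phi>b by (simp add: abs_le_iff)
        show "(\<lambda>y. \<phi> (x k) (fst y)) \<in> borel_measurable \<Gamma>"
          unfolding \<Gamma>_def by (simp add: \<phi>c)
      qed
    qed
    also have "\<dots> = (\<Prod>k<n. \<psi> (x k))"
    proof (intro prod.cong refl)
      fix k
      have "(LINT y|\<Gamma>. \<phi> (x k) (fst y)) = (LINT u|D. \<phi> (x k) (fst (u, 0::real)))"
        unfolding \<Gamma>_def by (rule integral_distr[OF pmD]) (simp add: \<phi>c)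
      then show "(LINT y|\<Gamma>. \<phi> (x k) (fst y)) = \<psi> (x k)" using \<psi> by simp
    qed
    finally show "integral\<^sup>L (PiM {..<n} (\<lambda>_. \<Gamma>)) (\<lambda>y. \<Phi> (x, y)) = (\<Prod>k<n. \<psi> (x k))" .
  qed
  also have "\<dots> = expectation (\<lambda>\<omega>. \<Prod>k<n. \<psi> (X k \<omega>))"
    by (subst integral_distr[OF Zxm]) (simp_all add: S_def Zx_def)
  finally show ?thesis .
qed

lemma (in prob_space) tier_laplace:
  fixes X :: "nat \<Rightarrow> 'a \<Rightarrow> real \<times> real" and G :: "nat \<Rightarrow> 'a \<Rightarrow> real"
  assumes PP: "poisson_pp M lam X" and lam: "0 < lam" and P: "0 < P" and Psi: "1 \<le> Psi"
    and al: "2 < alpha" and s: "0 < s"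
    and ind1: "\<And>n. indep_var (PiM UNIV (\<lambda>_. borel)) (\<lambda>\<omega> k. X k \<omega>)
                 (PiM {..<n} (\<lambda>_. borel \<Otimes>\<^sub>M borel)) (\<lambda>\<omega>. \<lambda>k\<in>{..<n}. (G k \<omega>, 0::real))"
    and ind2: "\<And>n. indep_vars (\<lambda>_. borel \<Otimes>\<^sub>M borel) (\<lambda>k \<omega>. (G k \<omega>, 0::real)) {..<n}"
    and dG: "\<And>k. distributed M lborel (G k) (erlang_density (Psi - 1) 1)"
  shows "expectation (\<lambda>\<omega>. exp_neg s (\<Sum>k. (if X k \<omega> = 0 then \<infinity>
                    else ennreal (P * G k \<omega> * norm (X k \<omega>) powr (- alpha)))))
       = exp (- (s powr (2 / alpha)) * (lam * P powr (2 / alpha) * C_const alpha Psi))"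
proof -
  have Xm[measurable]: "\<And>k. X k \<in> borel_measurable M" using PP by (simp add: poisson_pp_def)
  have Gm[measurable]: "\<And>k. G k \<in> borel_measurable M"
    using dG by (simp add: distributed_def)
  define D where "D = density lborel (\<lambda>x. ennreal (erlang_density (Psi - 1) 1 x))"
  have dGD: "distr M borel (G k) = D" for k
  proof -
    have "distr M borel (G k) = distr M lborel (G k)" by (rule distr_cong) simp_all
    also have "\<dots> = D" using dG[of k] by (simp add: distributed_def D_def)
    finally show ?thesis .
  qed
  define \<phi> where "\<phi> = phi_mark s P alpha"
  define H where "H = Hfun (alpha / 2) (s * P) Psi"
  define \<psi> where "\<psi> x = H (norm x ^ 2)" for x :: "real \<times> real"
  define Y where "Y \<omega> = exp_neg s (\<Sum>k. (if X k \<omega> = 0 then \<infinity>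
                    else ennreal (P * G k \<omega> * norm (X k \<omega>) powr (- alpha))))" for \<omega>
  have sP: "0 < s * P" using s P by simp
  have d0: "0 < 2 / alpha" "2 / alpha < 1" using al by auto
  have ad: "alpha / 2 * (2 / alpha) = 1" using al by simp
  have \<phi>Y: "(\<lambda>n. \<Prod>k<n. \<phi> (X k \<omega>) (G k \<omega>)) \<longlonglongrightarrow> Y \<omega>" for \<omega>
    unfolding \<phi>_def phi_mark_def Y_def by (rule exp_neg_suminf[OF s])
  have \<phi>m: "(\<lambda>\<omega>. \<phi> (X k \<omega>) (G k \<omega>)) \<in> borel_measurable M" for k
    using measurable_compose[OF measurable_Pair[OF Xm Gm] phi_mark_measurable[of s P alpha]]
    by (simp add: \<phi>_def)
  have pm: "(\<lambda>\<omega>. \<Prod>k<n. \<phi> (X k \<omega>) (G k \<omega>)) \<in> borel_measurable M" for n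
    using \<phi>m by (intro borel_measurable_prod) auto
  have Ym: "Y \<in> borel_measurable M"
    by (rule borel_measurable_LIMSEQ_real[where u="\<lambda>n \<omega>. \<Prod>k<n. \<phi> (X k \<omega>) (G k \<omega>)"])
       (use \<phi>Y pm in auto)
  have \<phi>b: "0 \<le> \<phi> x u \<and> \<phi> x u \<le> 1" for x u unfolding \<phi>_def by (rule phi_mark_bounds[OF s])
  have pb: "norm (\<Prod>k<n. \<phi> (X k \<omega>) (G k \<omega>)) \<le> 1" for n \<omega>
  proof -
    have "0 \<le> (\<Prod>k<n. \<phi> (X k \<omega>) (G k \<omega>))" using \<phi>b by (intro prod_nonneg) auto
    moreover have "(\<Prod>k<n. \<phi> (X k \<omega>) (G k \<omega>)) \<le> 1" using \<phi>b by (intro prod_le_1) auto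
    ultimately show ?thesis by simp
  qed
  have E1: "(\<lambda>n. expectation (\<lambda>\<omega>. \<Prod>k<n. \<phi> (X k \<omega>) (G k \<omega>))) \<longlonglongrightarrow> expectation Y"
  proof (rule integral_dominated_convergence[where w="\<lambda>_. 1"])
    show "Y \<in> borel_measurable M" by (rule Ym)
    show "(\<lambda>\<omega>. \<Prod>k<n. \<phi> (X k \<omega>) (G k \<omega>)) \<in> borel_measurable M" for n by (rule pm)
    show "integrable M (\<lambda>_. 1::real)" by simp
    show "AE x in M. (\<lambda>n. \<Prod>k<n. \<phi> (X k x) (G k x)) \<longlonglongrightarrow> Y x" using \<phi>Y by (intro AE_I2)
    show "AE x in M. norm (\<Prod>k<n. \<phi> (X k x) (G k x)) \<le> 1" for n using pb by (intro AE_I2)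
  qed
  have Hm[measurable]: "H \<in> borel_measurable borel" unfolding H_def by simp
  have \<psi>m: "\<psi> \<in> borel_measurable borel" unfolding \<psi>_def by measurable
  have \<psi>eq: "(LINT u|D. \<phi> x u) = \<psi> x" for x
    unfolding D_def \<phi>_def \<psi>_def H_def using mark_integral[OF s P _ Psi, of alpha x] al by simp
  have E2: "expectation (\<lambda>\<omega>. \<Prod>k<n. \<phi> (X k \<omega>) (G k \<omega>)) = expectation (\<lambda>\<omega>. \<Prod>k<n. H (norm (X k \<omega>) ^ 2))" for n
    using mark_expectation[OF Xm Gm ind1[of n] ind2[of n] dGD, of \<phi> \<psi>] \<phi>b \<psi>eq \<psi>m
    by (simp add: \<phi>_def \<psi>_def)
  have Hc: "continuous_on {0<..} H" unfolding H_def by (rule Hfun_cont[OF sP])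
  have H0: "0 \<le> H t" and H1: "H t \<le> 1" for t unfolding H_def using Hfun_bounds[OF sP] by auto
  note HI = Hfun_integral[OF d0 ad sP Psi]
  have E3: "(\<lambda>n. expectation (\<lambda>\<omega>. \<Prod>k<n. H (norm (X k \<omega>) ^ 2)))
      \<longlonglongrightarrow> exp (- lam * pi * (LINT t:{0<..}|lborel. 1 - H t))"
    by (rule pgf_main[OF PP _ Hm Hc H0 H1]) (use lam HI(1) in \<open>simp_all add: H_def\<close>)
  have "expectation Y = exp (- lam * pi * (LINT t:{0<..}|lborel. 1 - H t))"
    using LIMSEQ_unique[OF E1] E3 E2 by simp
  also have "\<dots> = exp (- (s powr (2 / alpha)) * (lam * P powr (2 / alpha) * C_const alpha Psi))"
  proof -
    have "lam * pi * (LINT t:{0<..}|lborel. 1 - H t)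
        = lam * pi * ((s * P) powr (2 / alpha) * (2 / alpha) *
            (\<Sum>m=1..Psi. real (Psi choose m) * Beta (real Psi - real m + 2 / alpha) (real m - 2 / alpha)))"
      using HI(2) by (simp add: H_def)
    also have "\<dots> = s powr (2 / alpha) * (lam * P powr (2 / alpha) * C_const alpha Psi)"
      using al by (simp add: C_const_def powr_mult field_simps)
    finally show ?thesis by simp
  qed
  finally show ?thesis unfolding Y_def .
qed

lemma (in prob_space) indep_vars_from_sets:
  fixes E :: "'i \<Rightarrow> 'a set set" and I :: "'j \<Rightarrow> 'i set" and J :: "'j set"
    and Z :: "'j \<Rightarrow> 'a \<Rightarrow> 'b" and N :: "'j \<Rightarrow> 'b measure"
  assumes indep: "indep_sets E (\<Union>j\<in>J. I j)"
    and stable: "\<And>i. Int_stable (E i)"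
    and disj: "disjoint_family_on I J"
    and meas: "\<And>j. j \<in> J \<Longrightarrow> Z j \<in> measurable (sigma (space M) (\<Union>i\<in>I j. E i)) (N j)"
  shows "indep_vars N Z J"
proof -
  have ev: "E i \<subseteq> events" if "i \<in> (\<Union>j\<in>J. I j)" for i
    using indep that unfolding indep_sets_def by blast
  have coll: "indep_sets (\<lambda>j. sigma_sets (space M) (\<Union>i\<in>I j. E i)) J"
    by (rule indep_sets_collect_sigma[OF indep]) (use stable disj in auto)
  have Pw: "(\<Union>i\<in>I j. E i) \<subseteq> Pow (space M)" if "j \<in> J" for j
    using ev that sets.sets_into_space by blast
  have sp: "space (sigma (space M) (\<Union>i\<in>I j. E i)) = space M" if "j \<in> J" for j
    using Pw[OF that] by (simp add: space_measure_of_conv)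
  have st: "sets (sigma (space M) (\<Union>i\<in>I j. E i)) = sigma_sets (space M) (\<Union>i\<in>I j. E i)" if "j \<in> J" for j
    using Pw[OF that] by (simp add: sets_measure_of)
  have sub: "sigma_sets (space M) (\<Union>i\<in>I j. E i) \<subseteq> events" if "j \<in> J" for j
    using ev that by (intro sets.sigma_sets_subset) blast
  show ?thesis unfolding indep_vars_def2
  proof
    show "\<forall>j\<in>J. random_variable (N j) (Z j)"
    proof
      fix j assume j: "j \<in> J"
      have "measurable (sigma (space M) (\<Union>i\<in>I j. E i)) (N j) \<subseteq> measurable M (N j)"
        by (rule measurable_mono) (use st[OF j] sub[OF j] sp[OF j] in auto)
      then show "random_variable (N j) (Z j)" using meas[OF j] by blast
    qed
    show "indep_sets (\<lambda>j. {Z j -` A \<inter> space M | A. A \<in> sets (N j)}) J"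
    proof (rule indep_sets_mono_sets[OF coll])
      fix j assume j: "j \<in> J"
      show "{Z j -` A \<inter> space M | A. A \<in> sets (N j)} \<subseteq> sigma_sets (space M) (\<Union>i\<in>I j. E i)"
      proof
        fix x assume "x \<in> {Z j -` A \<inter> space M | A. A \<in> sets (N j)}"
        then obtain A where A: "A \<in> sets (N j)" and x: "x = Z j -` A \<inter> space M" by blast
        have "Z j -` A \<inter> space (sigma (space M) (\<Union>i\<in>I j. E i)) \<in> sets (sigma (space M) (\<Union>i\<in>I j. E i))"
          by (rule measurable_sets[OF meas[OF j] A])
        then show "x \<in> sigma_sets (space M) (\<Union>i\<in>I j. E i)" using x st[OF j] sp[OF j] by simp
      qed
    qed
  qed
qed

lemma vimage_in_sigma:
  assumes i: "i \<in> I" and Ei: "E i = sets (vimage_algebra \<Omega> f N)" and f: "f \<in> \<Omega> \<rightarrow> space N"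
    and Pw: "\<And>i. i \<in> I \<Longrightarrow> E i \<subseteq> Pow \<Omega>"
  shows "f \<in> measurable (sigma \<Omega> (\<Union>i\<in>I. E i)) N"
proof -
  have 1: "f \<in> measurable (vimage_algebra \<Omega> f N) N" by (rule measurable_vimage_algebra1[OF f])
  have P: "(\<Union>i\<in>I. E i) \<subseteq> Pow \<Omega>" using Pw by blast
  have "sets (vimage_algebra \<Omega> f N) \<subseteq> sets (sigma \<Omega> (\<Union>i\<in>I. E i))"
    using i Ei P by (auto simp: sets_measure_of intro: sigma_sets.Basic)
  moreover have "space (sigma \<Omega> (\<Union>i\<in>I. E i)) = \<Omega>" using P by (simp add: space_measure_of_conv)
  ultimately have "measurable (vimage_algebra \<Omega> f N) N \<subseteq> measurable (sigma \<Omega> (\<Union>i\<in>I. E i)) N"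
    by (intro measurable_mono) auto
  then show ?thesis using 1 by blast
qed

theorem lemma4:
  fixes M :: "'a measure" and K :: nat and lam P :: "nat \<Rightarrow> real" and Psi :: "nat \<Rightarrow> nat"
    and alpha s :: real
    and X :: "nat \<Rightarrow> nat \<Rightarrow> 'a \<Rightarrow> real \<times> real" and g :: "nat \<Rightarrow> nat \<Rightarrow> 'a \<Rightarrow> real"
  assumes "prob_space M"
    and "\<forall>j<K. lam j > 0 \<and> P j > 0 \<and> Psi j \<ge> 1"
    and "alpha > 2" and "s > 0"
    and "\<forall>j<K. poisson_pp M (lam j) (X j)"
    and "\<forall>j<K. \<forall>k. distributed M lborel (g j k) (erlang_density (Psi j - 1) 1)"
    and "prob_space.indep_sets M (mark_sigma M X g)
           ({Inl j | j. j < K} \<union> {Inr (j, k) | j k. j < K})"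
  shows "prob_space.expectation M (\<lambda>\<omega>. exp_neg s (interference K P alpha X g \<omega>))
         = exp (- (s powr (2 / alpha)) *
                (\<Sum>j<K. lam j * P j powr (2 / alpha) * C_const alpha (Psi j)))"
proof -
  interpret prob_space M by (rule assms(1))
  have par: "lam j > 0" "P j > 0" "Psi j \<ge> 1" if "j < K" for j using assms(2) that by auto
  have al: "2 < alpha" and s: "0 < s" using assms(3,4) by auto
  have PP: "poisson_pp M (lam j) (X j)" if "j < K" for j using assms(5) that by auto
  have dG: "distributed M lborel (g j k) (erlang_density (Psi j - 1) 1)" if "j < K" for j k
    using assms(6) that by auto
  define E where "E = mark_sigma M X g"
  define U where "U = ({Inl j | j. j < K} \<union> {Inr (j, k) | j k. j < K} :: (nat + nat \<times> nat) set)"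
  have indU: "indep_sets E U" using assms(7) by (simp add: E_def U_def)
  have Xm: "X j k \<in> borel_measurable M" if "j < K" for j k using PP[OF that] by (simp add: poisson_pp_def)
  have gm: "g j k \<in> borel_measurable M" if "j < K" for j k using dG[OF that] by (simp add: distributed_def)
  have EInl: "E (Inl j) = sets (vimage_algebra (space M) (\<lambda>\<omega> k. X j k \<omega>) (Pi\<^sub>M UNIV (\<lambda>_. borel)))" for j
    by (simp add: E_def mark_sigma_def)
  have EInr: "E (Inr (j, k)) = sets (vimage_algebra (space M) (g j k) borel)" for j k
    by (simp add: E_def mark_sigma_def)
  have sets_pow: "sets (vimage_algebra (space M) f N) \<subseteq> Pow (space M)" for f and N :: "'z measure"
    using sets.sets_into_space[of _ "vimage_algebra (space M) f N"] by auto
  have EPow: "E i \<subseteq> Pow (space M)" for i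
  proof (cases i)
    case (Inl j) then show ?thesis using sets.sets_into_space[where M="vimage_algebra (space M) (\<lambda>\<omega> k. X j k \<omega>) (Pi\<^sub>M UNIV (\<lambda>_. borel))"]
      by (auto simp: EInl)
  next
    case (Inr jk) then obtain j k where "i = Inr (j, k)" by (cases jk) auto
    then show ?thesis using sets.sets_into_space[where M="vimage_algebra (space M) (g j k) borel"]
      by (auto simp: EInr)
  qed
  have Est: "Int_stable (E i)" for i
  proof (cases i)
    case (Inl j) then show ?thesis by (auto simp: EInl intro!: Int_stableI)
  next
    case (Inr jk) then obtain j k where "i = Inr (j, k)" by (cases jk) auto
    then show ?thesis by (auto simp: EInr intro!: Int_stableI)
  qed
  have Zx_in: "(\<lambda>\<omega> k. X j k \<omega>) \<in> space M \<rightarrow> space (Pi\<^sub>M UNIV (\<lambda>_. borel :: (real \<times> real) measure))" for j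
    by (auto simp: space_PiM)
  have g_in: "g j k \<in> space M \<rightarrow> space (borel :: real measure)" for j k by simp
  have ind1: "indep_var (PiM UNIV (\<lambda>_. borel)) (\<lambda>\<omega> k. X j k \<omega>)
      (PiM {..<n} (\<lambda>_. borel \<Otimes>\<^sub>M borel)) (\<lambda>\<omega>. \<lambda>k\<in>{..<n}. (g j k \<omega>, 0::real))"
    if j: "j < K" for j n
  proof -
    define I where "I b = (if b then {Inl j} else {Inr (j, k) | k. k < n})" for b :: bool
    have UI: "(\<Union>b\<in>UNIV. I b) \<subseteq> U" using j by (auto simp: I_def U_def)
    have indI: "indep_sets E (\<Union>b\<in>UNIV. I b)" by (rule indep_sets_mono_index[OF UI indU])
    have dI: "disjoint_family_on I UNIV" by (auto simp: disjoint_family_on_def I_def)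
    have m1: "(\<lambda>\<omega> k. X j k \<omega>) \<in> measurable (sigma (space M) (\<Union>i\<in>I True. E i)) (PiM UNIV (\<lambda>_. borel))"
      by (rule vimage_in_sigma[where E=E and i="Inl j"]) (simp_all add: I_def EInl EPow Zx_in sets_pow)
    have gk: "g j k \<in> measurable (sigma (space M) (\<Union>i\<in>I False. E i)) borel" if "k < n" for k
      by (rule vimage_in_sigma[where E=E and i="Inr (j, k)"]) (use that in \<open>simp_all add: I_def EInr EPow sets_pow\<close>)
    have m2: "(\<lambda>\<omega>. \<lambda>k\<in>{..<n}. (g j k \<omega>, 0::real)) \<in> measurable (sigma (space M) (\<Union>i\<in>I False. E i)) (PiM {..<n} (\<lambda>_. borel \<Otimes>\<^sub>M borel))"
      by (rule measurable_restrict) (auto intro!: measurable_Pair gk)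
    have "indep_vars (case_bool (PiM UNIV (\<lambda>_. borel)) (PiM {..<n} (\<lambda>_. borel \<Otimes>\<^sub>M borel)))
        (case_bool (\<lambda>\<omega> k. X j k \<omega>) (\<lambda>\<omega>. \<lambda>k\<in>{..<n}. (g j k \<omega>, 0::real))) UNIV"
    proof (rule indep_vars_from_sets[OF indI Est dI])
      fix b :: bool
      show "case_bool (\<lambda>\<omega> k. X j k \<omega>) (\<lambda>\<omega>. \<lambda>k\<in>{..<n}. (g j k \<omega>, 0::real)) b
          \<in> measurable (sigma (space M) (\<Union>i\<in>I b. E i)) (case_bool (PiM UNIV (\<lambda>_. borel)) (PiM {..<n} (\<lambda>_. borel \<Otimes>\<^sub>M borel)) b)"
        using m1 m2 by (cases b) simp_all
    qed
    then show ?thesis unfolding indep_var_def .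
  qed
  have ind2: "indep_vars (\<lambda>_. borel \<Otimes>\<^sub>M borel) (\<lambda>k \<omega>. (g j k \<omega>, 0::real)) {..<n}"
    if j: "j < K" for j n
  proof (rule indep_vars_from_sets[where I="\<lambda>k. {Inr (j, k)}" and E=E, OF _ Est])
    show "indep_sets E (\<Union>k\<in>{..<n}. {Inr (j, k)})"
      by (rule indep_sets_mono_index[OF _ indU]) (use j in \<open>auto simp: U_def\<close>)
    show "disjoint_family_on (\<lambda>k. {Inr (j, k)}) {..<n}" by (auto simp: disjoint_family_on_def)
    fix k assume "k \<in> {..<n}"
    have "g j k \<in> measurable (sigma (space M) (\<Union>i\<in>{Inr (j, k)}. E i)) borel"
      by (rule vimage_in_sigma[where E=E and i="Inr (j, k)"]) (simp_all add: EInr EPow sets_pow)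
    then show "(\<lambda>\<omega>. (g j k \<omega>, 0::real)) \<in> measurable (sigma (space M) (\<Union>i\<in>{Inr (j, k)}. E i)) (borel \<Otimes>\<^sub>M borel)"
      by (intro measurable_Pair) auto
  qed
  define Y where "Y j \<omega> = exp_neg s (\<Sum>k. (if X j k \<omega> = 0 then \<infinity>
                    else ennreal (P j * g j k \<omega> * norm (X j k \<omega>) powr (- alpha))))" for j \<omega>
  have EY: "expectation (Y j) = exp (- (s powr (2 / alpha)) * (lam j * P j powr (2 / alpha) * C_const alpha (Psi j)))"
    if j: "j < K" for j
    unfolding Y_def
    by (rule tier_laplace[OF PP[OF j] par(1)[OF j] par(2)[OF j] par(3)[OF j] al s ind1[OF j] ind2[OF j] dG[OF j]])
  have indY: "indep_vars (\<lambda>_. borel) Y {..<K}"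
  proof (rule indep_vars_from_sets[where I="\<lambda>j. {Inl j} \<union> {Inr (j, k) | k. True}" and E=E, OF _ Est])
    have "(\<Union>j\<in>{..<K}. {Inl j} \<union> {Inr (j, k) | k. True}) = U" by (auto simp: U_def)
    then show "indep_sets E (\<Union>j\<in>{..<K}. {Inl j} \<union> {Inr (j, k) | k. True})" using indU by simp
    show "disjoint_family_on (\<lambda>j. {Inl j} \<union> {Inr (j, k) | k. True}) {..<K}"
      by (auto simp: disjoint_family_on_def)
    fix j assume "j \<in> {..<K}"
    define N where "N = sigma (space M) (\<Union>i\<in>{Inl j} \<union> {Inr (j, k) | k. True}. E i)"
    have Zxm: "(\<lambda>\<omega> k. X j k \<omega>) \<in> measurable N (PiM UNIV (\<lambda>_. borel))"
      unfolding N_def by (rule vimage_in_sigma[where E=E and i="Inl j"]) (simp_all add: EInl EPow Zx_in sets_pow)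
    have Xm'[measurable]: "X j k \<in> borel_measurable N" for k
      using measurable_compose[OF Zxm measurable_component_singleton[of k UNIV "\<lambda>_. borel"]] by simp
    have gm'[measurable]: "g j k \<in> borel_measurable N" for k
      unfolding N_def by (rule vimage_in_sigma[where E=E and i="Inr (j, k)"]) (simp_all add: EInr EPow sets_pow)
    show "Y j \<in> borel_measurable N" unfolding Y_def[abs_def] by measurable
  qed
  have Yb: "0 \<le> Y j \<omega> \<and> Y j \<omega> \<le> 1" for j \<omega>
    using exp_neg_nonneg exp_neg_le1 s by (simp add: Y_def)
  have Yi: "integrable M (Y j)" if "j \<in> {..<K}" for j
  proof (rule integrable_const_bound[where B=1])
    show "AE x in M. norm (Y j x) \<le> 1" using Yb by (intro AE_I2) (simp add: abs_le_iff)
    show "Y j \<in> borel_measurable M" using indY that by (auto simp: indep_vars_def2)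
  qed
  have "expectation (\<lambda>\<omega>. exp_neg s (interference K P alpha X g \<omega>)) = expectation (\<lambda>\<omega>. \<Prod>j<K. Y j \<omega>)"
    by (simp add: interference_def Y_def exp_neg_sum)
  also have "\<dots> = (\<Prod>j<K. expectation (Y j))"
    by (rule indep_vars_lebesgue_integral[OF _ indY Yi]) simp_all
  also have "\<dots> = (\<Prod>j<K. exp (- (s powr (2 / alpha)) * (lam j * P j powr (2 / alpha) * C_const alpha (Psi j))))"
    by (intro prod.cong refl EY) simp
  also have "\<dots> = exp (\<Sum>j<K. - (s powr (2 / alpha)) * (lam j * P j powr (2 / alpha) * C_const alpha (Psi j)))"
    by (simp add: exp_sum)
  also have "\<dots> = exp (- (s powr (2 / alpha)) * (\<Sum>j<K. lam j * P j powr (2 / alpha) * C_const alpha (Psi j)))"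
    by (simp add: sum_distrib_left)
  finally show ?thesis .
qed

end
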